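(* Let $\Omega$ be a bounded domain in $\mathbb R^n$, $n\ge3$, whose boundary $\partial\Omega$ is a smooth hypersurface, and let $(f,\Gamma)$ satisfy the standing structural assumptions. If $u$ is a continuous viscosity solution of $f(\lambda(-A^u))=1$, $u>0$ in $\Omega$, with $u(x)\to+\infty$ as $\mathrm{dist}(x,\partial\Omega)\to0$, then $$\lim_{\mathrm{dist}(x,\partial\Omega)\to0}\mathrm{dist}(x,\partial\Omega)^{\frac{n-2}{2}}u(x)=\alpha\,2^{-\frac{n-2}{2}},$$ where $\alpha=\alpha(f)$ is the constant of the canonical solutions.
   Context: Let $n\ge3$. For a positive $C^2$ function $u$, its conformal Hessian is $A^u=-\frac{2}{n-2}u^{-\frac{n+2}{n-2}}\nabla^2u+\frac{2n}{(n-2)^2}u^{-\frac{2n}{n-2}}\nabla u\otimes\nabla u-\frac{2}{(n-2)^2}u^{-\frac{2n}{n-2}}|\nabla u|^2I$, and $\lambda(-A^u)$ is the vector of eigenvalues of $-A^u$. Let $\Gamma_n=\{\mu:\mu_i>0\ \forall i\}$. Standing structural assumptions on $(f,\Gamma)$: $\Gamma\subset\mathbb R^n$ is an open symmetric cone with vertex at the origin, $\Gamma+\Gamma_n\subset\Gamma$; $f\in C^0(\bar\Gamma)$ symmetric, $f>0$ in $\Gamma$, $f=0$ on $\partial\Gamma$, $f(\lambda+\mu)\ge f(\lambda)$ for $\lambda\in\Gamma,\mu\in\Gamma_n$, $f$ homogeneous of some positive degree. Viscosity solutions: sub-solutions $u\in USC$ satisfy $f(\lambda(-A^\varphi(x_0)))\ge1$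 for every $C^2$ $\varphi$ touching $u$ from above at $x_0$; super-solutions $u\in LSC$ satisfy either $\lambda(-A^\varphi(x_0))\notin\bar\Gamma$ or $f(\lambda(-A^\varphi(x_0)))\le1$ for every $C^2$ $\varphi$ touching from below; solutions are continuous functions that are both. Canonical solutions: there is a unique constant $\alpha=\alpha(f)>0$ such that for all $R>0$, $x_0\in\mathbb R^n$ the functions $u^{(in)}_{R,x_0}(x)=\alpha\big(\frac{R}{R^2-|x-x_0|^2}\big)^{\frac{n-2}{2}}$ and $u^{(out)}_{R,x_0}(x)=\alpha\big(\frac{R}{|x-x_0|^2-R^2}\big)^{\frac{n-2}{2}}$ satisfy $f(\lambda(-A^{u}))=1$ in $B_R(x_0)$ and in $\mathbb R^n\setminus\bar B_R(x_0)$ respectively. *)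

theory Defs
  imports "HOL-Analysis.Analysis"
begin

definition pderiv :: "(real^'n \<Rightarrow> real) \<Rightarrow> 'n \<Rightarrow> real^'n \<Rightarrow> real" where
  "pderiv g i x = frechet_derivative g (at x) (axis i 1)"

definition grad :: "(real^'n \<Rightarrow> real) \<Rightarrow> real^'n \<Rightarrow> real^'n" where
  "grad g x = (\<chi> i. pderiv g i x)"

definition hess :: "(real^'n \<Rightarrow> real) \<Rightarrow> real^'n \<Rightarrow> real^'n^'n" where
  "hess g x = (\<chi> i j. pderiv (pderiv g i) j x)"

fun Ck_on :: "nat \<Rightarrow> (real^'n) set \<Rightarrow> (real^'n \<Rightarrow> real) \<Rightarrow> bool" where
  "Ck_on 0 S g = continuous_on S g"
| "Ck_on (Suc k) S g = (continuous_on S g \<and> (\<forall>x\<in>S. g differentiable (at x)) \<and>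
                        (\<forall>i. Ck_on k S (pderiv g i)))"

definition C2_on :: "(real^'n) set \<Rightarrow> (real^'n \<Rightarrow> real) \<Rightarrow> bool" where
  "C2_on S g \<longleftrightarrow> open S \<and> Ck_on 2 S g"

definition smooth_on :: "(real^'n) set \<Rightarrow> (real^'n \<Rightarrow> real) \<Rightarrow> bool" where
  "smooth_on S g \<longleftrightarrow> open S \<and> (\<forall>k. Ck_on k S g)"

definition smooth_bounded_domain :: "(real^'n) set \<Rightarrow> bool" where
  "smooth_bounded_domain \<Omega> \<longleftrightarrow> open \<Omega> \<and> connected \<Omega> \<and> bounded \<Omega> \<and> \<Omega> \<noteq> {} \<and>
     (\<forall>p\<in>frontier \<Omega>. \<exists>U \<rho>. p \<in> U \<and> smooth_on U \<rho> \<and> (\<forall>x\<in>U. grad \<rho> x \<noteq> 0) \<and>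
          \<Omega> \<inter> U = {x\<in>U. \<rho> x < 0} \<and> frontier \<Omega> \<inter> U = {x\<in>U. \<rho> x = 0})"

definition conf_hess :: "(real^'n::finite \<Rightarrow> real) \<Rightarrow> real^'n \<Rightarrow> real^'n^'n" where
  "conf_hess u x = (let n = real CARD('n); v = u x; g = grad u x in
     (- (2 / (n - 2)) * v powr (- (n + 2) / (n - 2))) *\<^sub>R hess u x
     + ((2 * n) / (n - 2)^2 * v powr (- (2 * n) / (n - 2))) *\<^sub>R (\<chi> i j. g $ i * g $ j)
     - ((2 / (n - 2)^2) * v powr (- (2 * n) / (n - 2)) * (norm g)^2) *\<^sub>R mat 1)"

definition diag_mat :: "real^'n \<Rightarrow> real^'n^'n" where
  "diag_mat l = (\<chi> i j. if i = j then l $ i else 0)"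

definition eigvals :: "real^'n^'n \<Rightarrow> real^'n" where
  "eigvals M = (SOME l. \<exists>P. orthogonal_matrix P \<and> M = P ** diag_mat l ** transpose P)"

definition lam_neg_A :: "(real^'n::finite \<Rightarrow> real) \<Rightarrow> real^'n \<Rightarrow> real^'n" where
  "lam_neg_A u x = eigvals (- conf_hess u x)"

definition pos_cone :: "(real^'n) set" where
  "pos_cone = {l. \<forall>i. l $ i > 0}"

definition structural :: "(real^'n \<Rightarrow> real) \<Rightarrow> (real^'n) set \<Rightarrow> bool" where
  "structural f \<Gamma> \<longleftrightarrow>
     open \<Gamma> \<and> \<Gamma> \<noteq> {} \<and>
     (\<forall>l\<in>\<Gamma>. \<forall>p. p permutes (UNIV::'n set) \<longrightarrow> (\<chi> i. l $ p i) \<in> \<Gamma>) \<and>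
     (\<forall>l\<in>\<Gamma>. \<forall>t>0. t *\<^sub>R l \<in> \<Gamma>) \<and>
     (\<forall>l\<in>\<Gamma>. \<forall>m\<in>pos_cone. l + m \<in> \<Gamma>) \<and>
     continuous_on (closure \<Gamma>) f \<and>
     (\<forall>l\<in>closure \<Gamma>. \<forall>p. p permutes (UNIV::'n set) \<longrightarrow> f (\<chi> i. l $ p i) = f l) \<and>
     (\<forall>l\<in>\<Gamma>. f l > 0) \<and>
     (\<forall>l\<in>frontier \<Gamma>. f l = 0) \<and>
     (\<forall>l\<in>\<Gamma>. \<forall>m\<in>pos_cone. f (l + m) \<ge> f l) \<and>
     (\<exists>d>0. \<forall>l\<in>closure \<Gamma>. \<forall>t>0. f (t *\<^sub>R l) = t powr d * f l)"

definition touches_above :: "(real^'n \<Rightarrow> real) \<Rightarrow> (real^'n \<Rightarrow> real) \<Rightarrow> (real^'n) set \<Rightarrow> real^'n \<Rightarrow> bool" where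
  "touches_above \<phi> u \<Omega> x0 \<longleftrightarrow> (\<exists>r>0. ball x0 r \<subseteq> \<Omega> \<and> C2_on (ball x0 r) \<phi> \<and>
      (\<forall>x\<in>ball x0 r. u x \<le> \<phi> x)) \<and> \<phi> x0 = u x0"

definition touches_below :: "(real^'n \<Rightarrow> real) \<Rightarrow> (real^'n \<Rightarrow> real) \<Rightarrow> (real^'n) set \<Rightarrow> real^'n \<Rightarrow> bool" where
  "touches_below \<phi> u \<Omega> x0 \<longleftrightarrow> (\<exists>r>0. ball x0 r \<subseteq> \<Omega> \<and> C2_on (ball x0 r) \<phi> \<and>
      (\<forall>x\<in>ball x0 r. \<phi> x \<le> u x)) \<and> \<phi> x0 = u x0"

definition visc_sub :: "(real^'n::finite \<Rightarrow> real) \<Rightarrow> (real^'n) set \<Rightarrow> (real^'n \<Rightarrow> real) \<Rightarrow> (real^'n) set \<Rightarrow> bool" where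
  "visc_sub f \<Gamma> u \<Omega> \<longleftrightarrow> (\<forall>x0\<in>\<Omega>. \<forall>\<phi>. touches_above \<phi> u \<Omega> x0 \<longrightarrow>
      lam_neg_A \<phi> x0 \<in> closure \<Gamma> \<and> f (lam_neg_A \<phi> x0) \<ge> 1)"

definition visc_super :: "(real^'n::finite \<Rightarrow> real) \<Rightarrow> (real^'n) set \<Rightarrow> (real^'n \<Rightarrow> real) \<Rightarrow> (real^'n) set \<Rightarrow> bool" where
  "visc_super f \<Gamma> u \<Omega> \<longleftrightarrow> (\<forall>x0\<in>\<Omega>. \<forall>\<phi>. touches_below \<phi> u \<Omega> x0 \<longrightarrow>
      lam_neg_A \<phi> x0 \<notin> closure \<Gamma> \<or> f (lam_neg_A \<phi> x0) \<le> 1)"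

definition visc_solution :: "(real^'n::finite \<Rightarrow> real) \<Rightarrow> (real^'n) set \<Rightarrow> (real^'n \<Rightarrow> real) \<Rightarrow> (real^'n) set \<Rightarrow> bool" where
  "visc_solution f \<Gamma> u \<Omega> \<longleftrightarrow> continuous_on \<Omega> u \<and> visc_sub f \<Gamma> u \<Omega> \<and> visc_super f \<Gamma> u \<Omega>"

definition classical_solution :: "(real^'n::finite \<Rightarrow> real) \<Rightarrow> (real^'n) set \<Rightarrow> (real^'n \<Rightarrow> real) \<Rightarrow> (real^'n) set \<Rightarrow> bool" where
  "classical_solution f \<Gamma> u S \<longleftrightarrow> C2_on S u \<and> (\<forall>x\<in>S. u x > 0 \<and>
      lam_neg_A u x \<in> closure \<Gamma> \<and> f (lam_neg_A u x) = 1)"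

definition u_in :: "'n::finite itself \<Rightarrow> real \<Rightarrow> real \<Rightarrow> real^'n \<Rightarrow> real^'n \<Rightarrow> real" where
  "u_in _ \<alpha> R x0 x = \<alpha> * (R / (R^2 - (dist x x0)^2)) powr ((real CARD('n) - 2) / 2)"

definition u_out :: "'n::finite itself \<Rightarrow> real \<Rightarrow> real \<Rightarrow> real^'n \<Rightarrow> real^'n \<Rightarrow> real" where
  "u_out _ \<alpha> R x0 x = \<alpha> * (R / ((dist x x0)^2 - R^2)) powr ((real CARD('n) - 2) / 2)"

text \<open>alpha is the canonical constant of f: the canonical functions solve the equation.
 (The paper asserts there is a unique such alpha > 0.)\<close>
definition canonical_const :: "(real^'n::finite \<Rightarrow> real) \<Rightarrow> (real^'n) set \<Rightarrow> real \<Rightarrow> bool" where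
  "canonical_const f \<Gamma> \<alpha> \<longleftrightarrow> \<alpha> > 0 \<and> (\<forall>R>0. \<forall>x0.
      classical_solution f \<Gamma> (u_in TYPE('n) \<alpha> R x0) (ball x0 R) \<and>
      classical_solution f \<Gamma> (u_out TYPE('n) \<alpha> R x0) (- cball x0 R))"

end

theory Submission
  imports Defs
begin

lemma linear_expand:
  fixes D :: "real^'n \<Rightarrow> real"
  assumes "linear D"
  shows "D v = (\<Sum>i\<in>UNIV. v$i * D (axis i 1))"
proof -
  have "v = (\<Sum>i\<in>UNIV. v$i *\<^sub>R axis i 1)"
    using basis_expansion[of v] by (simp add: scalar_mult_eq_scaleR)
  then have "D v = D (\<Sum>i\<in>UNIV. v$i *\<^sub>R axis i 1)" by simp
  also have "\<dots> = (\<Sum>i\<in>UNIV. v$i * D (axis i 1))"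
    using assms by (simp add: linear_sum linear_scale)
  finally show ?thesis .
qed

lemma has_derivative_grad:
  fixes g :: "real^'n \<Rightarrow> real"
  assumes "g differentiable (at x)"
  shows "(g has_derivative (\<lambda>v. grad g x \<bullet> v)) (at x)"
proof -
  have d: "(g has_derivative frechet_derivative g (at x)) (at x)"
    using assms frechet_derivative_works by blast
  have "linear (frechet_derivative g (at x))"
    using d has_derivative_linear by blast
  then have "frechet_derivative g (at x) = (\<lambda>v. grad g x \<bullet> v)"
  proof -
    show ?thesis proof (rule ext)
    fix v
    show "frechet_derivative g (at x) v = grad g x \<bullet> v"
      using linear_expand[OF \<open>linear (frechet_derivative g (at x))\<close>, of v]
      by (simp add: grad_def pderiv_def inner_vec_def mult.commute)
  qed qed
  then show ?thesis using d by simp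
qed

lemma pderiv_local:
  fixes g h :: "real^'n \<Rightarrow> real"
  assumes "open S" "x \<in> S" "\<And>z. z \<in> S \<Longrightarrow> g z = h z" "(h has_derivative D) (at x)"
  shows "pderiv g i x = D (axis i 1)"
proof -
  have "(g has_derivative D) (at x)"
    using has_derivative_transform_within_open[OF assms(4) assms(1) assms(2)] assms(3) by metis
  then show ?thesis unfolding pderiv_def using frechet_derivative_at by metis
qed

lemma chain_real:
  fixes h :: "real^'n \<Rightarrow> real"
  assumes "(h has_derivative H) (at z)" "(F has_real_derivative D) (at (h z))"
  shows "((\<lambda>z. F (h z)) has_derivative (\<lambda>v. D * H v)) (at z)"
proof -
  have "(F has_derivative (*) D) (at (h z))"
    using assms(2) unfolding has_field_derivative_def .
  from diff_chain_at[OF assms(1) this] show ?thesis by (simp add: o_def)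
qed

definition hsq :: "real^'n \<Rightarrow> real^'n \<Rightarrow> real" where
  "hsq c z = (z - c) \<bullet> (z - c)"

lemma hsq_deriv: "(hsq c has_derivative (\<lambda>v. 2 * ((z - c) \<bullet> v))) (at z)"
proof -
  have "((\<lambda>z. (z - c) \<bullet> (z - c)) has_derivative (\<lambda>v. (z - c) \<bullet> v + v \<bullet> (z - c))) (at z)"
    by (auto intro!: derivative_eq_intros)
  then show ?thesis unfolding hsq_def by (simp add: inner_commute)
qed

lemma hsq_cont: "isCont (hsq c) z"
  using hsq_deriv has_derivative_continuous by blast

locale radial =
  fixes S :: "(real^'n) set" and c :: "real^'n" and F F1 F2 :: "real \<Rightarrow> real"
  assumes S: "open S"
    and d1: "\<And>z. z \<in> S \<Longrightarrow> (F has_real_derivative F1 (hsq c z)) (at (hsq c z))"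
    and d2: "\<And>z. z \<in> S \<Longrightarrow> (F1 has_real_derivative F2 (hsq c z)) (at (hsq c z))"
    and c2: "\<And>z. z \<in> S \<Longrightarrow> isCont F2 (hsq c z)"
begin

definition "uu = (\<lambda>z. F (hsq c z))"

lemma uu_deriv: "z \<in> S \<Longrightarrow> (uu has_derivative (\<lambda>v. F1 (hsq c z) * (2 * ((z - c) \<bullet> v)))) (at z)"
  unfolding uu_def by (rule chain_real[OF hsq_deriv d1])

definition "P i = (\<lambda>z. 2 * F1 (hsq c z) * (z - c)$i)"

lemma pd1: "z \<in> S \<Longrightarrow> pderiv uu i z = P i z"
proof -
  assume z: "z \<in> S"
  have "pderiv uu i z = F1 (hsq c z) * (2 * ((z - c) \<bullet> axis i 1))"
    by (rule pderiv_local[OF S z _ uu_deriv[OF z]]) simp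
  then show ?thesis by (simp add: P_def inner_axis)
qed

lemma P_deriv: "z \<in> S \<Longrightarrow> (P i has_derivative
   (\<lambda>v. 2 * F1 (hsq c z) * v$i + 2 * (F2 (hsq c z) * (2 * ((z - c) \<bullet> v))) * (z - c)$i)) (at z)"
proof -
  assume z: "z \<in> S"
  have a: "((\<lambda>z. 2 * F1 (hsq c z)) has_derivative (\<lambda>v. 2 * (F2 (hsq c z) * (2 * ((z - c) \<bullet> v))))) (at z)"
    using has_derivative_mult_right[OF chain_real[OF hsq_deriv d2[OF z]], of 2] by simp
  have b: "((\<lambda>z. (z - c)$i) has_derivative (\<lambda>v. v$i)) (at z)"
    by (auto intro!: derivative_eq_intros bounded_linear_imp_has_derivative)
  show ?thesis using has_derivative_mult[OF a b] unfolding P_def by (simp add: algebra_simps)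
qed

lemma pd2: "z \<in> S \<Longrightarrow> pderiv (pderiv uu i) j z =
    4 * F2 (hsq c z) * (z - c)$i * (z - c)$j + 2 * F1 (hsq c z) * (if i = j then 1 else 0)"
proof -
  assume z: "z \<in> S"
  have "pderiv (pderiv uu i) j z = 2 * F1 (hsq c z) * (axis j 1)$i + 2 * (F2 (hsq c z) * (2 * ((z - c) \<bullet> axis j 1))) * (z - c)$i"
    by (rule pderiv_local[OF S z _ P_deriv[OF z]]) (simp add: pd1)
  moreover have "(axis j 1 :: real^'n)$i = (if i = j then 1 else 0)" by (simp add: axis_def)
  ultimately show ?thesis by (simp add: inner_axis algebra_simps)
qed

lemma F1_cont: "z \<in> S \<Longrightarrow> isCont (\<lambda>z. F1 (hsq c z)) z"
  by (rule isCont_o2[OF hsq_cont]) (use d2 DERIV_isCont in blast)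

lemma F2_cont: "z \<in> S \<Longrightarrow> isCont (\<lambda>z. F2 (hsq c z)) z"
  by (rule isCont_o2[OF hsq_cont c2])


lemma cPP: "continuous_on S (pderiv (pderiv uu i) j)"
  proof -
    have ci: "isCont (\<lambda>z. (z - c)$k) z" for k z
      by (intro isCont_diff bounded_linear.isCont[OF bounded_linear_vec_nth] continuous_ident continuous_const)
    have "continuous_on S (\<lambda>z. 4 * F2 (hsq c z) * (z - c)$i * (z - c)$j + 2 * F1 (hsq c z) * (if i = j then 1 else 0))"
      by (intro continuous_at_imp_continuous_on ballI isCont_add isCont_mult continuous_const F1_cont F2_cont ci)
    then show ?thesis by (rule continuous_on_eq) (simp add: pd2)
  qed

lemma cu: "continuous_on S uu"
  by (intro continuous_at_imp_continuous_on ballI differentiable_imp_continuous_within) (use uu_deriv differentiable_def in blast)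

lemma difP: "\<forall>x\<in>S. pderiv uu i differentiable (at x)"
  proof
    fix x assume x: "x \<in> S"
    have "(pderiv uu i has_derivative (\<lambda>v. 2 * F1 (hsq c x) * v$i + 2 * (F2 (hsq c x) * (2 * ((x - c) \<bullet> v))) * (x - c)$i)) (at x)"
      by (rule has_derivative_transform_within_open[OF P_deriv[OF x] S x]) (simp add: pd1)
    then show "pderiv uu i differentiable (at x)" using differentiable_def by blast
  qed

lemma cP: "continuous_on S (pderiv uu i)"
  by (intro continuous_at_imp_continuous_on ballI differentiable_imp_continuous_within) (use difP in blast)

lemma difu: "\<forall>x\<in>S. uu differentiable (at x)"
  using uu_deriv differentiable_def by blast

lemma C2: "C2_on S uu"
  unfolding C2_on_def numeral_2_eq_2 Ck_on.simps using S cu difu difP cP cPP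
  by blast

lemma grad_uu: "z \<in> S \<Longrightarrow> grad uu z = (2 * F1 (hsq c z)) *\<^sub>R (z - c)"
  by (simp add: grad_def pd1 P_def vec_eq_iff)

lemma hess_uu: "z \<in> S \<Longrightarrow> hess uu z = (4 * F2 (hsq c z)) *\<^sub>R (\<chi> i j. (z - c)$i * (z - c)$j)
   + (2 * F1 (hsq c z)) *\<^sub>R mat 1"
  by (simp add: hess_def pd2 vec_eq_iff mat_def)

end

definition Fe :: "real \<Rightarrow> real \<Rightarrow> real \<Rightarrow> real \<Rightarrow> real \<Rightarrow> real" where
  "Fe e a r k s = a * (r / (e * (s - r^2))) powr k"

lemma Fe_d1:
  assumes e: "e = 1 \<or> e = -1" and r: "r > 0" and X: "e * (s - r^2) > 0"
  shows "(Fe e a r k has_real_derivative (- e * k * Fe e a r k s / (e * (s - r^2)))) (at s)"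
proof -
  have "((\<lambda>s. a * (r / (e * (s - r^2))) powr k) has_real_derivative
     a * (k * (r / (e * (s - r^2))) powr (k - 1) * (- r * e / (e * (s - r^2))^2))) (at s)"
    using X r e
    by (auto intro!: derivative_eq_intros simp: power2_eq_square field_simps)
  moreover have "a * (k * (r / (e * (s - r^2))) powr (k - 1) * (- r * e / (e * (s - r^2))^2))
      = - e * k * Fe e a r k s / (e * (s - r^2))"
  proof -
    define X where "X = e * (s - r^2)"
    define P where "P = (r / X) powr k"
    have X0: "X > 0" using X X_def by simp
    have "(r / X) powr (k - 1) = P * (X / r)"
      using X0 r by (simp add: P_def powr_diff)
    then show ?thesis unfolding Fe_def X_def[symmetric] P_def[symmetric]
      using X0 r by (simp add: power2_eq_square field_simps)
  qed
  ultimately show ?thesis unfolding Fe_def by simp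
qed

definition F1e where "F1e e a r k s = - e * k * Fe e a r k s / (e * (s - r^2))"
definition F2e where "F2e e a r k s = k * (k + 1) * Fe e a r k s / (e * (s - r^2))^2"

lemma Fe_d2:
  assumes e: "e = 1 \<or> e = -1" and r: "r > 0" and X: "e * (s - r^2) > 0"
  shows "(F1e e a r k has_real_derivative F2e e a r k s) (at s)"
proof -
  have d: "(Fe e a r k has_real_derivative (- e * k * Fe e a r k s / (e * (s - r^2)))) (at s)"
    by (rule Fe_d1[OF e r X])
  have n: "((\<lambda>s. (- e * k) * Fe e a r k s) has_real_derivative (- e * k) * (- e * k * Fe e a r k s / (e * (s - r^2)))) (at s)"
    by (rule DERIV_cmult[OF d])
  have dd: "((\<lambda>s. e * (s - r^2)) has_real_derivative e) (at s)"
    by (auto intro!: derivative_eq_intros)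
  have "((\<lambda>s. (- e * k) * Fe e a r k s / (e * (s - r^2))) has_real_derivative
      (((- e * k) * (- e * k * Fe e a r k s / (e * (s - r^2)))) * (e * (s - r^2)) - e * ((- e * k) * Fe e a r k s)) / (e * (s - r^2)) ^ Suc (Suc 0)) (at s)"
    by (rule DERIV_quotient[OF n dd]) (use X in force)
  moreover have "(((- e * k) * (- e * k * Fe e a r k s / (e * (s - r^2)))) * (e * (s - r^2)) - e * ((- e * k) * Fe e a r k s)) / (e * (s - r^2)) ^ Suc (Suc 0)
     = F2e e a r k s"
  proof -
    define Y where "Y = s - r^2"
    define G where "G = Fe e a r k s"
    have Y: "Y \<noteq> 0" using X Y_def by auto
    show ?thesis unfolding F2e_def Y_def[symmetric] G_def[symmetric]
      using e Y by (elim disjE) (simp_all add: field_simps power2_eq_square)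
  qed
  ultimately show ?thesis unfolding F1e_def by simp
qed

lemma F2e_cont:
  assumes e: "e = 1 \<or> e = -1" and r: "r > 0" and X: "e * (s - r^2) > 0"
  shows "isCont (F2e e a r k) s"
proof -
  have "isCont (Fe e a r k) s" using Fe_d1[OF e r X] DERIV_isCont by blast
  then show ?thesis unfolding F2e_def using X by (auto intro!: continuous_intros)
qed

context radial begin

lemma conf_hess_uu:
  assumes z: "z \<in> S"
  defines "n \<equiv> real CARD('n)" and "s \<equiv> hsq c z" and "v \<equiv> F (hsq c z)"
  shows "conf_hess uu z =
    (- (2 / (n - 2)) * v powr (- (n + 2) / (n - 2)) * (4 * F2 s)
      + (2 * n) / (n - 2)^2 * v powr (- (2 * n) / (n - 2)) * (4 * (F1 s)^2)) *\<^sub>R (\<chi> i j. (z - c)$i * (z - c)$j)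
    + (- (2 / (n - 2)) * v powr (- (n + 2) / (n - 2)) * (2 * F1 s)
      - (2 / (n - 2)^2) * v powr (- (2 * n) / (n - 2)) * (4 * (F1 s)^2 * s)) *\<^sub>R mat 1"
proof -
  have g: "(norm (grad uu z))^2 = 4 * (F1 s)^2 * s"
    unfolding grad_uu[OF z] s_def hsq_def
    by (simp add: power_mult_distrib power2_norm_eq_inner[symmetric])
  have G: "(\<chi> i j. grad uu z $ i * grad uu z $ j) = (4 * (F1 s)^2) *\<^sub>R (\<chi> i j. (z - c)$i * (z - c)$j)"
    unfolding grad_uu[OF z] s_def by (simp add: vec_eq_iff power2_eq_square)
  have vv: "uu z = v" by (simp add: uu_def v_def)
  define A where "A = - (2 / (n - 2)) * v powr (- (n + 2) / (n - 2))"
  define B where "B = (2 * n) / (n - 2)^2 * v powr (- (2 * n) / (n - 2))"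
  define C where "C = (2 / (n - 2)^2) * v powr (- (2 * n) / (n - 2))"
  have "conf_hess uu z = A *\<^sub>R hess uu z + B *\<^sub>R (4 * (F1 s)^2) *\<^sub>R (\<chi> i j. (z - c)$i * (z - c)$j)
       - (C * (4 * (F1 s)^2 * s)) *\<^sub>R mat 1"
    unfolding conf_hess_def Let_def vv G g n_def[symmetric] A_def B_def C_def by simp
  also have "\<dots> = (A * (4 * F2 s) + B * (4 * (F1 s)^2)) *\<^sub>R (\<chi> i j. (z - c)$i * (z - c)$j)
       + (A * (2 * F1 s) - C * (4 * (F1 s)^2 * s)) *\<^sub>R mat 1"
    unfolding hess_uu[OF z] s_def[symmetric]
    by (simp add: scaleR_add_right scaleR_add_left scaleR_diff_left algebra_simps)
  finally show ?thesis unfolding A_def B_def C_def .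
qed

end

lemma alg1:
  fixes V v X k e :: real
  assumes "v > 0" "X > 0" "k > 0" "e * e = 1"
  shows "- (2 / (2 * k + 2 - 2)) * (V / v) * (4 * (k * (k + 1) * v / X^2))
      + (2 * (2 * k + 2)) / (2 * k + 2 - 2)^2 * (V / v^2) * (4 * (- e * k * v / X)^2) = 0"
proof -
  have sq: "(- e * k * v / X)^2 = k^2 * v^2 / X^2"
  proof -
    have "(- e * k * v / X)^2 = (e * e) * (k^2 * v^2 / X^2)" by (simp add: power2_eq_square field_simps)
    then show ?thesis using assms by simp
  qed
  show ?thesis unfolding sq using assms by (simp add: power2_eq_square field_simps)
qed
lemma alg2:
  fixes V v X k e a r :: real
  assumes "v > 0" "X > 0" "k > 0" "e * e = 1" "r > 0"
  shows "- (2 / (2 * k + 2 - 2)) * (V * (X / r)^2 / v) * (2 * (- e * k * v / X))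
      - (2 / (2 * k + 2 - 2)^2) * (V * (X / r)^2 / v^2) * (4 * (- e * k * v / X)^2 * (e * X + r^2))
      = - 2 * V"
proof -
  have sq: "(- e * k * v / X)^2 = k^2 * v^2 / X^2"
  proof -
    have "(- e * k * v / X)^2 = (e * e) * (k^2 * v^2 / X^2)" by (simp add: power2_eq_square field_simps)
    then show ?thesis using assms by simp
  qed
  show ?thesis unfolding sq using assms by (simp add: power2_eq_square field_simps)
qed

lemma coef_calc:
  fixes n k a r X e s v :: real
  assumes n: "n > 2" and k: "k = (n - 2) / 2" and a: "a > 0" and r: "r > 0" and X: "X > 0"
    and e: "e = 1 \<or> e = -1" and Xs: "X = e * (s - r^2)" and v: "v = a * (r / X) powr k"
  shows "- (2 / (n - 2)) * v powr (- (n + 2) / (n - 2)) * (4 * (k * (k + 1) * v / X^2))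
      + (2 * n) / (n - 2)^2 * v powr (- (2 * n) / (n - 2)) * (4 * (- e * k * v / X)^2) = 0"
    and "- (2 / (n - 2)) * v powr (- (n + 2) / (n - 2)) * (2 * (- e * k * v / X))
      - (2 / (n - 2)^2) * v powr (- (2 * n) / (n - 2)) * (4 * (- e * k * v / X)^2 * s)
      = - 2 * a powr (- 4 / (n - 2))"
proof -
  define q where "q = - 4 / (n - 2)"
  have v0: "v > 0" using v a r X by simp
  have p1: "v powr (- (n + 2) / (n - 2)) = v powr q / v"
  proof -
    have "- (n + 2) / (n - 2) = q - 1" using n by (simp add: q_def field_simps)
    then show ?thesis using v0 by (simp add: powr_diff)
  qed
  have p2: "v powr (- (2 * n) / (n - 2)) = v powr q / v^2"
  proof -
    have "- (2 * n) / (n - 2) = q - 2" using n by (simp add: q_def field_simps)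
    then show ?thesis using v0 by (simp add: powr_diff)
  qed
  have vq: "v powr q = a powr q * (X / r)^2"
  proof -
    have "v powr q = a powr q * ((r / X) powr k) powr q" using v a r X by (simp add: powr_mult)
    also have "((r / X) powr k) powr q = (r / X) powr (k * q)"
      by (simp add: powr_powr)
    also have "k * q = -2" using n by (simp add: k q_def field_simps)
    also have "(r / X) powr (-2) = (X / r)^2" using r X
      by (simp add: powr_minus powr_divide power_divide)
    finally show ?thesis .
  qed
  have ee: "e * e = 1" using e by auto
  have nk: "n - 2 = 2 * k" "n = 2 * k + 2" using k by auto
  have k0: "k > 0" using n k by simp
  show "- (2 / (n - 2)) * v powr (- (n + 2) / (n - 2)) * (4 * (k * (k + 1) * v / X^2))
      + (2 * n) / (n - 2)^2 * v powr (- (2 * n) / (n - 2)) * (4 * (- e * k * v / X)^2) = 0"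
    unfolding p1 p2 unfolding nk(2) using alg1[OF v0 X k0 ee, of "v powr q"] by simp
  have "e * X = (e * e) * (s - r^2)" using Xs by simp
  then have "e * X = s - r^2" using ee by simp
  then have s: "s = e * X + r^2" by simp
  show "- (2 / (n - 2)) * v powr (- (n + 2) / (n - 2)) * (2 * (- e * k * v / X))
      - (2 / (n - 2)^2) * v powr (- (2 * n) / (n - 2)) * (4 * (- e * k * v / X)^2 * s)
      = - 2 * a powr (- 4 / (n - 2))"
    unfolding p1 p2 vq q_def[symmetric] s unfolding nk(2) using alg2[OF v0 X k0 ee r, of "a powr q"] by simp
qed

definition ue :: "real \<Rightarrow> real \<Rightarrow> real \<Rightarrow> real^'n::finite \<Rightarrow> real^'n \<Rightarrow> real" where
  "ue e a r c z = Fe e a r ((real CARD('n) - 2) / 2) (hsq c z)"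

lemma hsq_dist: "hsq c x = (dist x c)^2"
  by (simp add: hsq_def dist_norm power2_norm_eq_inner)

lemma u_in_ue: "u_in TYPE('n::finite) a r c = ue (-1) a r c"
  by (simp add: fun_eq_iff u_in_def ue_def Fe_def hsq_dist)

lemma u_out_ue: "u_out TYPE('n::finite) a r c = ue 1 a r c"
  by (simp add: fun_eq_iff u_out_def ue_def Fe_def hsq_dist)

lemma ue_props:
  fixes S :: "(real^'n::finite) set"
  assumes n: "CARD('n) \<ge> 3" and e: "e = 1 \<or> e = -1" and r: "r > 0" and a: "a > 0"
    and S: "open S" and Sz: "\<And>z. z \<in> S \<Longrightarrow> e * (hsq c z - r^2) > 0"
  shows "C2_on S (ue e a r c)"
    and "\<And>z. z \<in> S \<Longrightarrow> - conf_hess (ue e a r c) z = (2 * a powr (- 4 / (real CARD('n) - 2))) *\<^sub>R mat 1"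
proof -
  define k where "k = (real CARD('n) - 2) / 2"
  interpret radial S c "Fe e a r k" "F1e e a r k" "F2e e a r k"
  proof
    show "open S" by (rule S)
    fix z assume z: "z \<in> S"
    show "(Fe e a r k has_real_derivative F1e e a r k (hsq c z)) (at (hsq c z))"
      using Fe_d1[OF e r Sz[OF z]] unfolding F1e_def .
    show "(F1e e a r k has_real_derivative F2e e a r k (hsq c z)) (at (hsq c z))"
      by (rule Fe_d2[OF e r Sz[OF z]])
    show "isCont (F2e e a r k) (hsq c z)"
      by (rule F2e_cont[OF e r Sz[OF z]])
  qed
  have uu: "uu = ue e a r c" using uu_def by (simp add: fun_eq_iff ue_def k_def)
  show "C2_on S (ue e a r c)" using C2 uu by simp
  fix z assume z: "z \<in> S"
  define s where "s = hsq c z"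
  define X where "X = e * (s - r^2)"
  define n where "n = real CARD('n)"
  have X: "X > 0" using Sz[OF z] by (simp add: X_def s_def)
  have n2: "n > 2" using n by (simp add: n_def)
  have kk: "k = (n - 2) / 2" by (simp add: k_def n_def)
  have v: "Fe e a r k s = a * (r / X) powr k" by (simp add: Fe_def X_def)
  have f1: "F1e e a r k s = - e * k * Fe e a r k s / X" by (simp add: F1e_def X_def)
  have f2: "F2e e a r k s = k * (k + 1) * Fe e a r k s / X^2" by (simp add: F2e_def X_def)
  note cc = coef_calc[OF n2 kk a r X e X_def v]
  have "conf_hess (ue e a r c) z = 0 *\<^sub>R (\<chi> i j. (z - c)$i * (z - c)$j)
       + (- 2 * a powr (- 4 / (n - 2))) *\<^sub>R mat 1"
    using conf_hess_uu[OF z] unfolding uu n_def[symmetric] s_def[symmetric] f1 f2 cc by simp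
  then show "- conf_hess (ue e a r c) z = (2 * a powr (- 4 / (real CARD('n) - 2))) *\<^sub>R mat 1"
    by (simp add: n_def)
qed

lemma diag_const: "diag_mat (\<chi> i. c) = c *\<^sub>R (mat 1 :: real^'n^'n)"
  by (simp add: diag_mat_def vec_eq_iff mat_def)

lemma mm_scaleR_r: "(A :: real^'m^'n) ** (c *\<^sub>R (B :: real^'k^'m)) = c *\<^sub>R (A ** B)"
  by (simp add: matrix_matrix_mult_def vec_eq_iff sum_distrib_left mult_ac)
lemma mm_scaleR_l: "(c *\<^sub>R (A :: real^'m^'n)) ** (B :: real^'k^'m) = c *\<^sub>R (A ** B)"
  by (simp add: matrix_matrix_mult_def vec_eq_iff sum_distrib_left mult_ac)

lemma eig_scalar: "eigvals (c *\<^sub>R (mat 1 :: real^'n^'n)) = (\<chi> i. c)"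
proof -
  let ?M = "c *\<^sub>R (mat 1 :: real^'n^'n)"
  have ex: "\<exists>l P. orthogonal_matrix P \<and> ?M = P ** diag_mat l ** transpose P"
    by (rule exI[of _ "\<chi> i. c"], rule exI[of _ "mat 1"]) (simp add: orthogonal_matrix_id diag_const)
  then have "\<exists>P. orthogonal_matrix P \<and> ?M = P ** diag_mat (eigvals ?M) ** transpose P"
    unfolding eigvals_def by (rule someI_ex)
  then obtain P where P: "orthogonal_matrix P" and M: "?M = P ** diag_mat (eigvals ?M) ** transpose P"
    by blast
  have PP: "transpose P ** P = mat 1" "P ** transpose P = mat 1"
    using P by (auto simp: orthogonal_matrix_def)
  have "transpose P ** ?M ** P = diag_mat (eigvals ?M)"
  proof -
    have "transpose P ** (P ** diag_mat (eigvals ?M) ** transpose P) ** P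
        = (transpose P ** P) ** diag_mat (eigvals ?M) ** (transpose P ** P)"
      by (simp add: matrix_mul_assoc)
    then show ?thesis by (subst M) (simp add: PP)
  qed
  moreover have "transpose P ** ?M ** P = ?M"
    by (simp add: mm_scaleR_r mm_scaleR_l PP)
  ultimately have "diag_mat (eigvals ?M) = ?M" by simp
  then show ?thesis
  proof -
    have "diag_mat (eigvals ?M) $ i $ i = ?M $ i $ i" for i using \<open>diag_mat (eigvals ?M) = ?M\<close> by simp
    then have "eigvals ?M $ i = c" for i by (simp add: diag_mat_def mat_def)
    then show ?thesis by (simp add: vec_eq_iff)
  qed
qed

definition regn :: "real \<Rightarrow> real \<Rightarrow> real^'n \<Rightarrow> (real^'n) set" where
  "regn e r c = {z. 0 < e * (hsq c z - r^2)}"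

lemma open_regn: "open (regn e r c)"
  unfolding regn_def
  by (rule open_Collect_less) (auto simp: hsq_def intro!: continuous_intros)

lemma lam_ue:
  fixes c :: "real^'n::finite"
  assumes n: "CARD('n) \<ge> 3" and e: "e = 1 \<or> e = -1" and r: "r > 0" and a: "a > 0"
    and z: "z \<in> regn e r c"
  shows "lam_neg_A (ue e a r c) z = (\<chi> i. 2 * a powr (- 4 / (real CARD('n) - 2)))"
proof -
  have Sz: "\<And>z. z \<in> regn e r c \<Longrightarrow> e * (hsq c z - r^2) > 0" by (simp add: regn_def)
  show ?thesis unfolding lam_neg_A_def
    using ue_props(2)[OF n e r a open_regn Sz z] eig_scalar by simp
qed

lemma C2_ue:
  fixes c :: "real^'n::finite"
  assumes n: "CARD('n) \<ge> 3" and e: "e = 1 \<or> e = -1" and r: "r > 0" and a: "a > 0"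
    and S: "open S" "S \<subseteq> regn e r c"
  shows "C2_on S (ue e a r c)"
proof -
  have Sz: "\<And>z. z \<in> S \<Longrightarrow> e * (hsq c z - r^2) > 0" using S(2) by (auto simp: regn_def)
  show ?thesis using ue_props(1)[OF n e r a S(1) Sz] .
qed

lemma closure_cone:
  assumes "\<forall>l\<in>\<Gamma>. \<forall>t>0. t *\<^sub>R l \<in> \<Gamma>" "l \<in> closure \<Gamma>" "(t::real) > 0"
  shows "t *\<^sub>R l \<in> closure (\<Gamma> :: (real^'n) set)"
proof -
  have "t *\<^sub>R l \<in> ((*\<^sub>R) t) ` closure \<Gamma>" using assms(2) by blast
  also have "\<dots> = closure (((*\<^sub>R) t) ` \<Gamma>)" by (rule closure_scaleR)
  also have "\<dots> \<subseteq> closure \<Gamma>" using assms(1,3) by (intro closure_mono) auto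
  finally show ?thesis .
qed

lemma ball_infdist_sub:
  fixes \<Omega> :: "'a::euclidean_space set"
  assumes "open \<Omega>" "x \<in> \<Omega>"
  shows "ball x (infdist x (frontier \<Omega>)) \<subseteq> \<Omega>"
proof (rule ccontr)
  assume "\<not> ?thesis"
  then have a: "ball x (infdist x (frontier \<Omega>)) - \<Omega> \<noteq> {}" by blast
  then obtain z0 where "z0 \<in> ball x (infdist x (frontier \<Omega>))" by blast
  then have "infdist x (frontier \<Omega>) > 0" by (metis mem_ball zero_le_dist order_le_less_trans)
  then have b: "ball x (infdist x (frontier \<Omega>)) \<inter> \<Omega> \<noteq> {}" using assms by (metis centre_in_ball IntI empty_iff)
  obtain z where "z \<in> ball x (infdist x (frontier \<Omega>))" "z \<in> frontier \<Omega>"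
    using connected_Int_frontier[OF connected_ball b a] by blast
  then show False using infdist_le[of z "frontier \<Omega>" x] by (simp add: dist_commute)
qed

locale setting =
  fixes f :: "real^'n::finite \<Rightarrow> real" and \<Gamma> :: "(real^'n) set"
    and \<Omega> :: "(real^'n) set" and u :: "real^'n \<Rightarrow> real" and \<alpha> :: real
  assumes n: "CARD('n) \<ge> 3"
    and dom: "smooth_bounded_domain \<Omega>"
    and str: "structural f \<Gamma>"
    and can: "canonical_const f \<Gamma> \<alpha>"
    and sol: "visc_solution f \<Gamma> u \<Omega>"
    and pos: "\<forall>x\<in>\<Omega>. u x > 0"
    and blow: "\<forall>M. \<exists>\<delta>>0. \<forall>x\<in>\<Omega>. infdist x (frontier \<Omega>) < \<delta> \<longrightarrow> u x > M"
begin

definition "q = - 4 / (real CARD('n) - 2)"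
definition "kk = (real CARD('n) - 2) / 2"
definition "L0 = (\<chi> i::'n. 2 * \<alpha> powr q)"

lemma q_neg: "q < 0" using n by (simp add: q_def)
lemma kk_pos: "kk > 0" using n by (simp add: kk_def)
lemma alpha_pos: "\<alpha> > 0" using can by (simp add: canonical_const_def)
lemma open_dom: "open \<Omega>" using dom by (simp add: smooth_bounded_domain_def)
lemma ucont: "continuous_on \<Omega> u" using sol by (simp add: visc_solution_def)

lemma homog: obtains d where "d > 0" "\<And>l t. l \<in> closure \<Gamma> \<Longrightarrow> t > 0 \<Longrightarrow> f (t *\<^sub>R l) = t powr d * f l"
proof -
  have "\<exists>d>0. \<forall>l\<in>closure \<Gamma>. \<forall>t>0. f (t *\<^sub>R l) = t powr d * f l"
    by (insert str, unfold structural_def, elim conjE, assumption)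
  then show ?thesis using that by blast
qed

lemma cone: "l \<in> closure \<Gamma> \<Longrightarrow> t > 0 \<Longrightarrow> t *\<^sub>R l \<in> closure \<Gamma>"
proof -
  have "\<forall>l\<in>\<Gamma>. \<forall>t>0. t *\<^sub>R l \<in> \<Gamma>"
    by (insert str, unfold structural_def, elim conjE, assumption)
  then show "l \<in> closure \<Gamma> \<Longrightarrow> t > 0 \<Longrightarrow> t *\<^sub>R l \<in> closure \<Gamma>" using closure_cone by blast
qed

lemma L0: "L0 \<in> closure \<Gamma>" "f L0 = 1"
proof -
  have cs: "classical_solution f \<Gamma> (u_in TYPE('n) \<alpha> 1 0) (ball 0 1)"
    using can by (simp add: canonical_const_def)
  have z: "(0::real^'n) \<in> regn (-1) 1 0" by (simp add: regn_def hsq_def)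
  have "lam_neg_A (u_in TYPE('n) \<alpha> 1 0) 0 = L0"
    unfolding u_in_ue L0_def q_def using lam_ue[OF n _ _ alpha_pos z] by simp
  moreover have "lam_neg_A (u_in TYPE('n) \<alpha> 1 0) 0 \<in> closure \<Gamma> \<and> f (lam_neg_A (u_in TYPE('n) \<alpha> 1 0) 0) = 1"
    using cs unfolding classical_solution_def by (metis centre_in_ball zero_less_one)
  ultimately show "L0 \<in> closure \<Gamma>" "f L0 = 1" by auto
qed

lemma lam_scaled:
  assumes e: "e = 1 \<or> e = -1" and r: "r > 0" and t: "t > 0" and z: "z \<in> regn e r c"
  shows "lam_neg_A (ue e (t * \<alpha>) r c) z = (t powr q) *\<^sub>R L0"
  using lam_ue[OF n e r _ z, of "t * \<alpha>"] t alpha_pos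
  by (simp add: L0_def q_def powr_mult vec_eq_iff)

end

context setting begin

lemma ue_val: fixes c :: "real^'n" shows "ue e a r c y = a * (r / (e * (hsq c y - r^2))) powr kk"
  by (simp add: ue_def Fe_def kk_def)

lemma ue_scale: fixes c :: "real^'n" shows "ue e (t * a) r c y = t * ue e a r c y"
  by (simp add: ue_def Fe_def)

lemma in_ball_hsq: "z \<in> ball c r \<Longrightarrow> hsq c z < r^2"
  by (simp add: hsq_dist dist_commute power_strict_mono)

lemma ball_regn: "r > 0 \<Longrightarrow> ball c r \<subseteq> regn (-1) r c"
  using in_ball_hsq by (auto simp: regn_def)

lemma upper_cmp:
  assumes r: "r > 0" and sub: "cball c r \<subseteq> \<Omega>" and y: "y \<in> ball c r"
  shows "u y \<le> ue (-1) \<alpha> r c y"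
proof (rule ccontr)
  define v where "v = ue (-1) \<alpha> r c"
  assume "\<not> u y \<le> ue (-1) \<alpha> r c y"
  then have gt: "u y > v y" by (simp add: v_def)
  define G where "G z = u z * (r^2 - hsq c z) powr kk / (\<alpha> * r powr kk)" for z
  have a: "\<alpha> > 0" by (rule alpha_pos)
  have k: "kk > 0" by (rule kk_pos)
  have vpos: "v z > 0" if "z \<in> ball c r" for z
    using in_ball_hsq[OF that] a r by (simp add: v_def ue_val)
  have Gv: "G z * v z = u z" if "z \<in> ball c r" for z
  proof -
    have X: "r^2 - hsq c z > 0" using in_ball_hsq[OF that] by simp
    have "v z = \<alpha> * (r powr kk / (r^2 - hsq c z) powr kk)"
      by (simp add: v_def ue_val powr_divide)
    then show ?thesis using X a r by (simp add: G_def field_simps)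
  qed
  have Gcont: "continuous_on (cball c r) G"
  proof -
    have cu: "continuous_on (cball c r) u" using continuous_on_subset[OF ucont sub] .
    have P: "continuous_on (cball c r) (\<lambda>z. (r^2 - hsq c z) powr kk)"
    proof (rule continuous_on_powr')
      show "continuous_on (cball c r) (\<lambda>z. r^2 - hsq c z)"
        unfolding hsq_def by (intro continuous_intros)
      show "continuous_on (cball c r) (\<lambda>z. kk)" by (intro continuous_intros)
      show "\<forall>x\<in>cball c r. 0 \<le> r^2 - hsq c x \<and> (r^2 - hsq c x = 0 \<longrightarrow> 0 < kk)"
        using k r by (auto simp: hsq_dist dist_commute power_mono)
    qed
    have "continuous_on (cball c r) (\<lambda>z. u z * (r^2 - hsq c z) powr kk / (\<alpha> * r powr kk))"
      by (rule continuous_on_divide[OF continuous_on_mult[OF cu P] continuous_on_const]) (use a r in simp)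
    then show ?thesis unfolding G_def .
  qed
  obtain y1 where y1: "y1 \<in> cball c r" and y1max: "\<And>z. z \<in> cball c r \<Longrightarrow> G z \<le> G y1"
    using continuous_attains_sup[OF compact_cball _ Gcont] y by (metis ball_subset_cball empty_iff subsetD)
  define t where "t = G y1"
  have Gy: "G y > 1"
  proof -
    have "G y * v y > v y" using Gv[OF y] gt by simp
    then show ?thesis using vpos[OF y] by simp
  qed
  have t1: "t > 1" using y1max[of y] y Gy by (auto simp: t_def)
  have y1b: "y1 \<in> ball c r"
  proof (rule ccontr)
    assume "y1 \<notin> ball c r"
    then have "dist c y1 = r" using y1 by auto
    then have "hsq c y1 = r^2" by (simp add: hsq_dist dist_commute)
    then have "G y1 = 0" using k by (simp add: G_def)
    then show False using t1 t_def by simp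
  qed
  have le: "u z \<le> t * v z" if "z \<in> ball c r" for z
  proof -
    have "G z \<le> t" using y1max[of z] that by (auto simp: t_def)
    then have "G z * v z \<le> t * v z" using vpos[OF that] by (intro mult_right_mono) auto
    then show ?thesis using Gv[OF that] by simp
  qed
  define \<phi> where "\<phi> = ue (-1) (t * \<alpha>) r c"
  have phi: "\<phi> z = t * v z" for z by (simp add: \<phi>_def v_def ue_scale)
  define \<rho> where "\<rho> = r - dist y1 c"
  have rho: "\<rho> > 0" using y1b by (simp add: \<rho>_def dist_commute)
  have bsub: "ball y1 \<rho> \<subseteq> ball c r"
    unfolding \<rho>_def by (rule subsetI) (metis dist_commute dist_triangle_lt mem_ball add.commute diff_add_cancel less_diff_eq)
  have touch: "touches_above \<phi> u \<Omega> y1"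
    unfolding touches_above_def
  proof (intro conjI exI[of _ \<rho>])
    show "\<rho> > 0" by (rule rho)
    show "ball y1 \<rho> \<subseteq> \<Omega>" using bsub sub ball_subset_cball by blast
    show "C2_on (ball y1 \<rho>) \<phi>" unfolding \<phi>_def
      using C2_ue[OF n _ r _ open_ball, of "-1" "t * \<alpha>" y1 \<rho> c] bsub ball_regn[OF r] t1 a by auto
    show "\<forall>x\<in>ball y1 \<rho>. u x \<le> \<phi> x" using le bsub phi by auto
    show "\<phi> y1 = u y1" using phi Gv[OF y1b] t_def by simp
  qed
  have y1O: "y1 \<in> \<Omega>" using y1 sub by auto
  have "f (lam_neg_A \<phi> y1) \<ge> 1"
    using sol touch y1O unfolding visc_solution_def visc_sub_def by blast
  moreover have "lam_neg_A \<phi> y1 = (t powr q) *\<^sub>R L0"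
    unfolding \<phi>_def by (rule lam_scaled) (use t1 r ball_regn[OF r, of c] y1b in auto)
  moreover obtain d where d: "d > 0" "\<And>l t. l \<in> closure \<Gamma> \<Longrightarrow> t > 0 \<Longrightarrow> f (t *\<^sub>R l) = t powr d * f l"
    using homog by metis
  moreover have "(t powr q) powr d < 1"
  proof -
    have "t powr q < 1" using t1 q_neg by (rule powr_less_one)
    then have "(t powr q) powr d < 1 powr d" using d(1) by (intro powr_less_mono2) auto
    then show ?thesis by simp
  qed
  ultimately show False using L0 t1 by simp
qed

end

lemma C2_cont: "C2_on S g \<Longrightarrow> continuous_on S g"
  by (simp add: C2_on_def numeral_2_eq_2)

context setting begin

lemma bounded_dom: "bounded \<Omega>" using dom by (simp add: smooth_bounded_domain_def)

lemma lower_cmp: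
  assumes r: "r > 0" and rho: "0 < \<rho>" "\<rho> < r" and far: "\<forall>z\<in>\<Omega>. dist z c \<ge> r" and y: "y \<in> \<Omega>"
  shows "ue 1 \<alpha> \<rho> c y \<le> u y"
proof (rule ccontr)
  define v where "v = ue 1 \<alpha> \<rho> c"
  assume "\<not> ue 1 \<alpha> \<rho> c y \<le> u y"
  then have lt: "u y < v y" by (simp add: v_def)
  have a: "\<alpha> > 0" by (rule alpha_pos)
  have k: "kk > 0" by (rule kk_pos)
  have hs: "hsq c z \<ge> r^2" if "z \<in> \<Omega>" for z
    using far that r by (simp add: hsq_dist power_mono)
  have Oreg: "\<Omega> \<subseteq> regn 1 \<rho> c"
  proof
    fix z assume "z \<in> \<Omega>"
    then have "hsq c z \<ge> r^2" by (rule hs)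
    moreover have "r^2 > \<rho>^2" using rho by (simp add: power_strict_mono)
    ultimately show "z \<in> regn 1 \<rho> c" by (simp add: regn_def)
  qed
  define Vm where "Vm = \<alpha> * (\<rho> / (r^2 - \<rho>^2)) powr kk"
  have rr: "r^2 - \<rho>^2 > 0" using rho by (simp add: power_strict_mono)
  have vpos: "v z > 0" if "z \<in> \<Omega>" for z
    using Oreg that a rho by (auto simp: v_def ue_val regn_def)
  have vle: "v z \<le> Vm" if "z \<in> \<Omega>" for z
  proof -
    have "\<rho> / (hsq c z - \<rho>^2) \<le> \<rho> / (r^2 - \<rho>^2)"
      using hs[OF that] rr rho by (intro divide_left_mono) auto
    then have "(\<rho> / (hsq c z - \<rho>^2)) powr kk \<le> (\<rho> / (r^2 - \<rho>^2)) powr kk"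
      using hs[OF that] rr rho k by (intro powr_mono2) auto
    then show ?thesis using a by (simp add: v_def ue_val Vm_def)
  qed
  have vcont: "continuous_on \<Omega> v"
    unfolding v_def by (rule C2_cont[OF C2_ue[OF n _ rho(1) a open_dom Oreg]]) simp
  define t0 where "t0 = u y / v y"
  have t0: "0 < t0" "t0 < 1" using pos y vpos[OF y] lt by (auto simp: t0_def)
  obtain \<delta> where \<delta>: "\<delta> > 0" "\<And>z. z \<in> \<Omega> \<Longrightarrow> infdist z (frontier \<Omega>) < \<delta> \<Longrightarrow> u z > t0 * Vm"
    using blow by metis
  have nearb: "u z > t0 * v z" if "z \<in> \<Omega>" "infdist z (frontier \<Omega>) < \<delta>" for z
  proof -
    have "t0 * v z \<le> t0 * Vm" using vle[OF that(1)] t0 by simp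
    then show ?thesis using \<delta>(2)[OF that] by simp
  qed
  define K where "K = closure \<Omega> \<inter> {z. \<delta> \<le> infdist z (frontier \<Omega>)}"
  have KO: "K \<subseteq> \<Omega>"
  proof
    fix z assume z: "z \<in> K"
    then have "z \<notin> frontier \<Omega>" using \<delta>(1) by (auto simp: K_def)
    then show "z \<in> \<Omega>" using z by (auto simp: K_def closure_Un_frontier)
  qed
  have Kc: "compact K"
  proof -
    have "closed {z. \<delta> \<le> infdist z (frontier \<Omega>)}"
      by (rule closed_Collect_le) (auto intro!: continuous_intros)
    then have "closed K" unfolding K_def by (intro closed_Int) auto
    moreover have "bounded K" unfolding K_def using bounded_dom bounded_closure bounded_Int by blast
    ultimately show ?thesis by (simp add: compact_eq_bounded_closed)
  qed
  have yK: "y \<in> K"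
  proof -
    have "\<not> infdist y (frontier \<Omega>) < \<delta>"
    proof
      assume "infdist y (frontier \<Omega>) < \<delta>"
      then have "u y > t0 * v y" using nearb y by blast
      then show False using vpos[OF y] by (simp add: t0_def)
    qed
    then show ?thesis using y closure_subset by (auto simp: K_def)
  qed
  define g where "g z = u z / v z" for z
  have gcont: "continuous_on K g"
    unfolding g_def
    by (rule continuous_on_divide[OF continuous_on_subset[OF ucont KO] continuous_on_subset[OF vcont KO]])
      (use KO vpos in force)
  obtain y1 where y1: "y1 \<in> K" and y1min: "\<And>z. z \<in> K \<Longrightarrow> g y1 \<le> g z"
    using continuous_attains_inf[OF Kc _ gcont] yK by blast
  define t where "t = g y1"
  have y1O: "y1 \<in> \<Omega>" using y1 KO by auto
  have tpos: "t > 0" using pos y1O vpos[OF y1O] by (simp add: t_def g_def)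
  have tlt: "t < 1" using y1min[OF yK] t0 by (simp add: t_def g_def t0_def)
  have ge: "t * v z \<le> u z" if "z \<in> \<Omega>" for z
  proof (cases "z \<in> K")
    case True
    then have "t \<le> u z / v z" using y1min by (simp add: t_def g_def)
    then show ?thesis using vpos[OF that] by (simp add: field_simps)
  next
    case False
    then have "infdist z (frontier \<Omega>) < \<delta>" using that closure_subset by (auto simp: K_def)
    then have "u z > t0 * v z" using nearb that by blast
    moreover have "t \<le> t0" using y1min[OF yK] by (simp add: t_def g_def t0_def)
    then have "t * v z \<le> t0 * v z" using vpos[OF that] by (intro mult_right_mono) auto
    ultimately show ?thesis by simp
  qed
  define \<phi> where "\<phi> = ue 1 (t * \<alpha>) \<rho> c"
  have phi: "\<phi> z = t * v z" for z by (simp add: \<phi>_def v_def ue_scale)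
  define \<rho>1 where "\<rho>1 = infdist y1 (frontier \<Omega>)"
  have rho1: "\<rho>1 > 0" using y1 \<delta>(1) by (auto simp: K_def \<rho>1_def)
  have bsub: "ball y1 \<rho>1 \<subseteq> \<Omega>" unfolding \<rho>1_def by (rule ball_infdist_sub[OF open_dom y1O])
  have touch: "touches_below \<phi> u \<Omega> y1"
    unfolding touches_below_def
  proof (intro conjI exI[of _ \<rho>1])
    show "\<rho>1 > 0" by (rule rho1)
    show "ball y1 \<rho>1 \<subseteq> \<Omega>" by (rule bsub)
    show "C2_on (ball y1 \<rho>1) \<phi>" unfolding \<phi>_def
      by (rule C2_ue[OF n _ rho(1) _ open_ball]) (use bsub Oreg tpos a in auto)
    show "\<forall>x\<in>ball y1 \<rho>1. \<phi> x \<le> u x" using ge bsub phi by auto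
    show "\<phi> y1 = u y1" using phi vpos[OF y1O] by (simp add: t_def g_def)
  qed
  have lam: "lam_neg_A \<phi> y1 = (t powr q) *\<^sub>R L0"
    unfolding \<phi>_def by (rule lam_scaled) (use tpos rho Oreg y1O in auto)
  have tq: "t powr q > 1"
  proof -
    have "t powr (- q) < 1 powr (- q)" using tpos tlt q_neg by (intro powr_less_mono2) auto
    then have "t powr (- q) < 1" by simp
    moreover have "t powr q = inverse (t powr (- q))" by (simp add: powr_minus)
    moreover have "t powr (- q) > 0" using tpos by simp
    ultimately show ?thesis by (simp add: one_less_inverse)
  qed
  have inG: "lam_neg_A \<phi> y1 \<in> closure \<Gamma>" unfolding lam using cone[OF L0(1), of "t powr q"] tq tpos by simp
  obtain d where d: "d > 0" "\<And>l t. l \<in> closure \<Gamma> \<Longrightarrow> t > 0 \<Longrightarrow> f (t *\<^sub>R l) = t powr d * f l"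
    using homog by metis
  have "f (lam_neg_A \<phi> y1) = (t powr q) powr d" unfolding lam using d(2)[OF L0(1), of "t powr q"] L0(2) tq tpos by simp
  moreover have "(t powr q) powr d > 1" using tq d(1) by simp
  moreover have "lam_neg_A \<phi> y1 \<notin> closure \<Gamma> \<or> f (lam_neg_A \<phi> y1) \<le> 1"
    using sol touch y1O unfolding visc_solution_def visc_super_def by blast
  ultimately show False using inG by simp
qed

end

context setting begin

lemma upper_lim:
  assumes r: "r > 0" and sub: "ball c r \<subseteq> \<Omega>" and y: "y \<in> ball c r"
  shows "u y \<le> \<alpha> * (r / (r^2 - hsq c y)) powr kk"
proof -
  define \<Phi> where "\<Phi> \<rho> = \<alpha> * (\<rho> / (\<rho>^2 - hsq c y)) powr kk" for \<rho>
  have h: "hsq c y < r^2" by (rule in_ball_hsq[OF y])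
  have "continuous (at_left r) \<Phi>"
    unfolding \<Phi>_def using h r by (intro continuous_intros) auto
  then have lim: "(\<Phi> \<longlongrightarrow> \<Phi> r) (at_left r)" by (simp add: continuous_within)
  have ev: "eventually (\<lambda>\<rho>. u y \<le> \<Phi> \<rho>) (at_left r)"
  proof -
    have "dist c y < r" using y by simp
    then have "eventually (\<lambda>\<rho>. \<rho> \<in> {dist c y<..<r}) (at_left r)" by (rule eventually_at_left_real)
    then show ?thesis
    proof (rule eventually_mono)
      fix \<rho> assume \<rho>: "\<rho> \<in> {dist c y<..<r}"
      have \<rho>0: "\<rho> > 0" using \<rho> zero_le_dist[of c y] by (simp del: zero_le_dist)
      have "cball c \<rho> \<subseteq> ball c r" using \<rho> by auto
      then have "cball c \<rho> \<subseteq> \<Omega>" using sub by auto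
      moreover have "y \<in> ball c \<rho>" using \<rho> by simp
      ultimately have "u y \<le> ue (-1) \<alpha> \<rho> c y" by (intro upper_cmp[OF \<rho>0])
      then show "u y \<le> \<Phi> \<rho>" by (simp add: ue_val \<Phi>_def)
    qed
  qed
  have "u y \<le> \<Phi> r" by (rule tendsto_lowerbound[OF lim ev]) simp
  then show ?thesis by (simp add: \<Phi>_def)
qed

lemma lower_lim:
  assumes r: "r > 0" and far: "\<forall>z\<in>\<Omega>. dist z c \<ge> r" and y: "y \<in> \<Omega>" and yr: "dist y c > r"
  shows "\<alpha> * (r / (hsq c y - r^2)) powr kk \<le> u y"
proof -
  define \<Phi> where "\<Phi> \<rho> = \<alpha> * (\<rho> / (hsq c y - \<rho>^2)) powr kk" for \<rho>
  have h: "hsq c y > r^2" using yr r by (simp add: hsq_dist power_strict_mono)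
  have "continuous (at_left r) \<Phi>"
    unfolding \<Phi>_def using h r by (intro continuous_intros) auto
  then have lim: "(\<Phi> \<longlongrightarrow> \<Phi> r) (at_left r)" by (simp add: continuous_within)
  have ev: "eventually (\<lambda>\<rho>. \<Phi> \<rho> \<le> u y) (at_left r)"
  proof -
    have "eventually (\<lambda>\<rho>. \<rho> \<in> {0<..<r}) (at_left r)" by (rule eventually_at_left_real[OF r])
    then show ?thesis
    proof (rule eventually_mono)
      fix \<rho> assume \<rho>: "\<rho> \<in> {0<..<r}"
      have "ue 1 \<alpha> \<rho> c y \<le> u y" using \<rho> by (intro lower_cmp[OF r _ _ far y]) auto
      then show "\<Phi> \<rho> \<le> u y" by (simp add: ue_val \<Phi>_def)
    qed
  qed
  have "\<Phi> r \<le> u y" by (rule tendsto_upperbound[OF lim ev]) simp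
  then show ?thesis by (simp add: \<Phi>_def)
qed

end

lemma path_deriv:
  fixes g :: "real^'n \<Rightarrow> real"
  assumes "g differentiable (at (a + t *\<^sub>R v))"
  shows "((\<lambda>t. g (a + t *\<^sub>R v)) has_real_derivative (grad g (a + t *\<^sub>R v) \<bullet> v)) (at t)"
proof -
  have p: "((\<lambda>t. a + t *\<^sub>R v) has_derivative (\<lambda>h. h *\<^sub>R v)) (at t)"
    by (auto intro!: derivative_eq_intros)
  have "((\<lambda>t. g (a + t *\<^sub>R v)) has_derivative (\<lambda>h. grad g (a + t *\<^sub>R v) \<bullet> (h *\<^sub>R v))) (at t)"
    using diff_chain_at[OF p has_derivative_grad[OF assms]] by (simp add: o_def)
  then show ?thesis unfolding has_field_derivative_def
    by (rule has_derivative_eq_rhs) (simp add: fun_eq_iff inner_scaleR_right)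
qed

lemma mvt_grad:
  fixes g :: "real^'n \<Rightarrow> real"
  assumes "\<And>t. 0 \<le> t \<Longrightarrow> t \<le> 1 \<Longrightarrow> g differentiable (at (a + t *\<^sub>R (b - a)))"
  shows "\<exists>t. 0 < t \<and> t < 1 \<and> g b - g a = grad g (a + t *\<^sub>R (b - a)) \<bullet> (b - a)"
proof -
  have "\<exists>z::real. 0 < z \<and> z < 1 \<and> (g (a + 1 *\<^sub>R (b - a)) - g (a + 0 *\<^sub>R (b - a))
          = (1 - 0) * (grad g (a + z *\<^sub>R (b - a)) \<bullet> (b - a)))"
    by (rule MVT2[where f = "\<lambda>t. g (a + t *\<^sub>R (b - a))"]) (auto intro!: path_deriv assms)
  then show ?thesis by simp
qed

lemma abs_inner_le: "\<bar>x \<bullet> y\<bar> \<le> norm x * norm (y :: real^'n)"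
  by (rule Cauchy_Schwarz_ineq2)

lemma norm_grad_le: "norm (grad g z) \<le> (\<Sum>j\<in>UNIV. \<bar>pderiv g j z\<bar>)"
  using norm_le_l1_cart[of "grad g z"] by (simp add: grad_def)

lemma seg_in_cball:
  fixes p z w :: "real^'n"
  assumes "z \<in> cball p s" "w \<in> cball p s" "0 \<le> t" "t \<le> 1"
  shows "w + t *\<^sub>R (z - w) \<in> cball p s"
proof -
  have "(1 - t) *\<^sub>R w + t *\<^sub>R z \<in> cball p s"
    by (rule convexD[OF convex_cball assms(2) assms(1)]) (use assms in auto)
  moreover have "(1 - t) *\<^sub>R w + t *\<^sub>R z = w + t *\<^sub>R (z - w)" by (simp add: algebra_simps)
  ultimately show ?thesis by simp
qed

locale chart =
  fixes U :: "(real^'n) set" and \<rho> :: "real^'n \<Rightarrow> real" and p :: "real^'n" and s :: real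
  assumes U: "open U" and C2: "Ck_on 2 U \<rho>" and gnz: "\<And>x. x \<in> U \<Longrightarrow> grad \<rho> x \<noteq> 0"
    and sub: "cball p s \<subseteq> U" and s: "s > 0"
begin

lemma d\<rho>: "x \<in> U \<Longrightarrow> \<rho> differentiable (at x)"
  using C2 by (simp add: numeral_2_eq_2)
lemma dP: "x \<in> U \<Longrightarrow> pderiv \<rho> i differentiable (at x)"
  using C2 by (simp add: numeral_2_eq_2)
lemma cP: "continuous_on U (pderiv \<rho> i)"
  using C2 by (simp add: numeral_2_eq_2)
lemma cPP: "continuous_on U (pderiv (pderiv \<rho> i) j)"
  using C2 by (simp add: numeral_2_eq_2)

definition "Fs z = (\<Sum>i\<in>UNIV. \<Sum>j\<in>UNIV. \<bar>pderiv (pderiv \<rho> i) j z\<bar>)"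

lemma Bex: "\<exists>B\<ge>0. \<forall>z\<in>cball p s. \<forall>i j. \<bar>pderiv (pderiv \<rho> i) j z\<bar> \<le> B"
proof -
  have "continuous_on (cball p s) Fs"
    unfolding Fs_def
    by (intro continuous_intros continuous_on_subset[OF cPP sub])
  then obtain z0 where z0: "z0 \<in> cball p s" "\<And>z. z \<in> cball p s \<Longrightarrow> Fs z \<le> Fs z0"
    using continuous_attains_sup[OF compact_cball, of p s Fs] s by (metis centre_in_cball less_imp_le empty_iff)
  have "\<bar>pderiv (pderiv \<rho> i) j z\<bar> \<le> Fs z" for i j z
  proof -
    have "\<bar>pderiv (pderiv \<rho> i) j z\<bar> \<le> (\<Sum>j\<in>UNIV. \<bar>pderiv (pderiv \<rho> i) j z\<bar>)"
      by (rule member_le_sum) auto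
    also have "\<dots> \<le> Fs z" unfolding Fs_def
      by (rule member_le_sum[where f = "\<lambda>i. \<Sum>j\<in>UNIV. \<bar>pderiv (pderiv \<rho> i) j z\<bar>"]) (auto intro: sum_nonneg)
    finally show ?thesis .
  qed
  moreover have "Fs z0 \<ge> 0" unfolding Fs_def by (intro sum_nonneg) auto
  ultimately show ?thesis using z0 by (meson order_trans)
qed

definition "B = (SOME B. B \<ge> 0 \<and> (\<forall>z\<in>cball p s. \<forall>i j. \<bar>pderiv (pderiv \<rho> i) j z\<bar> \<le> B))"

lemma B: "B \<ge> 0" "\<And>z i j. z \<in> cball p s \<Longrightarrow> \<bar>pderiv (pderiv \<rho> i) j z\<bar> \<le> B"
  using someI_ex[OF Bex] unfolding B_def by auto

definition "nn = real CARD('n)"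

lemma lipP:
  assumes z: "z \<in> cball p s" and w: "w \<in> cball p s"
  shows "\<bar>pderiv \<rho> i z - pderiv \<rho> i w\<bar> \<le> nn * B * norm (z - w)"
proof -
  obtain t where t: "0 < t" "t < 1"
    and eq: "pderiv \<rho> i z - pderiv \<rho> i w = grad (pderiv \<rho> i) (w + t *\<^sub>R (z - w)) \<bullet> (z - w)"
    using mvt_grad[where a=w and b=z and g="pderiv \<rho> i"] dP seg_in_cball[OF z w] sub by blast
  define \<xi> where "\<xi> = w + t *\<^sub>R (z - w)"
  have \<xi>: "\<xi> \<in> cball p s" unfolding \<xi>_def using seg_in_cball[OF z w] t by auto
  have "\<bar>pderiv \<rho> i z - pderiv \<rho> i w\<bar> \<le> norm (grad (pderiv \<rho> i) \<xi>) * norm (z - w)"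
    unfolding eq \<xi>_def[symmetric] by (rule abs_inner_le)
  also have "norm (grad (pderiv \<rho> i) \<xi>) \<le> nn * B"
  proof -
    have "norm (grad (pderiv \<rho> i) \<xi>) \<le> (\<Sum>j\<in>UNIV. \<bar>pderiv (pderiv \<rho> i) j \<xi>\<bar>)" by (rule norm_grad_le)
    also have "\<dots> \<le> of_nat (card (UNIV :: 'n set)) * B" by (rule sum_bounded_above) (use B \<xi> in auto)
    finally show ?thesis by (simp add: nn_def)
  qed
  then have "norm (grad (pderiv \<rho> i) \<xi>) * norm (z - w) \<le> nn * B * norm (z - w)"
    by (intro mult_right_mono) auto
  finally show ?thesis .
qed

definition "L = nn * nn * B + 1"

lemma L_pos: "L > 0"
proof -
  have "0 \<le> nn * nn * B" using B(1) by (simp add: nn_def)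
  then show ?thesis by (simp add: L_def)
qed

lemma lipG:
  assumes z: "z \<in> cball p s" and w: "w \<in> cball p s"
  shows "norm (grad \<rho> z - grad \<rho> w) \<le> L * norm (z - w)"
proof -
  have "norm (grad \<rho> z - grad \<rho> w) \<le> (\<Sum>i\<in>UNIV. \<bar>(grad \<rho> z - grad \<rho> w) $ i\<bar>)"
    by (rule norm_le_l1_cart)
  also have "\<dots> \<le> of_nat (card (UNIV :: 'n set)) * (nn * B * norm (z - w))"
    by (rule sum_bounded_above) (use lipP[OF z w] in \<open>simp add: grad_def\<close>)
  also have "\<dots> = (nn * nn * B) * norm (z - w)" by (simp add: nn_def)
  also have "\<dots> \<le> L * norm (z - w)"
    by (intro mult_right_mono) (auto simp: L_def)
  finally show ?thesis .
qed

lemma taylor: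
  assumes y: "y \<in> cball p s" and q: "q \<in> cball p s"
  shows "\<bar>\<rho> y - \<rho> q - grad \<rho> q \<bullet> (y - q)\<bar> \<le> L * (norm (y - q))^2"
proof -
  obtain t where t: "0 < t" "t < 1"
    and eq: "\<rho> y - \<rho> q = grad \<rho> (q + t *\<^sub>R (y - q)) \<bullet> (y - q)"
    using mvt_grad[where a=q and b=y and g=\<rho>] d\<rho> seg_in_cball[OF y q] sub by blast
  define \<xi> where "\<xi> = q + t *\<^sub>R (y - q)"
  have \<xi>: "\<xi> \<in> cball p s" unfolding \<xi>_def using seg_in_cball[OF y q] t by auto
  have n\<xi>: "norm (\<xi> - q) \<le> norm (y - q)" using t by (simp add: \<xi>_def mult_left_le_one_le)
  have "\<rho> y - \<rho> q - grad \<rho> q \<bullet> (y - q) = (grad \<rho> \<xi> - grad \<rho> q) \<bullet> (y - q)"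
    unfolding eq \<xi>_def[symmetric] by (simp add: inner_diff_left)
  then have "\<bar>\<rho> y - \<rho> q - grad \<rho> q \<bullet> (y - q)\<bar> \<le> norm (grad \<rho> \<xi> - grad \<rho> q) * norm (y - q)"
    using abs_inner_le by metis
  also have "\<dots> \<le> (L * norm (\<xi> - q)) * norm (y - q)"
    by (intro mult_right_mono lipG[OF \<xi> q]) auto
  also have "\<dots> \<le> (L * norm (y - q)) * norm (y - q)"
    using L_pos n\<xi> by (intro mult_right_mono mult_left_mono) auto
  finally show ?thesis by (simp add: power2_eq_square mult.assoc)
qed

lemma mex: "\<exists>m>0. \<forall>z\<in>cball p s. m \<le> norm (grad \<rho> z)"
proof -
  have "continuous_on (cball p s) (\<lambda>z. norm (grad \<rho> z))"
    unfolding grad_def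
    by (intro continuous_on_norm continuous_on_vec_lambda continuous_on_subset[OF cP sub])
  then obtain z0 where z0: "z0 \<in> cball p s" "\<And>z. z \<in> cball p s \<Longrightarrow> norm (grad \<rho> z0) \<le> norm (grad \<rho> z)"
    using continuous_attains_inf[OF compact_cball, of p s] s by (metis centre_in_cball less_imp_le empty_iff)
  have "norm (grad \<rho> z0) > 0" using gnz z0(1) sub by auto
  then show ?thesis using z0 by blast
qed

end

locale chart_dom = chart U \<rho> p s for U :: "(real^'n) set" and \<rho> p s +
  fixes \<Omega> :: "(real^'n) set"
  assumes inter: "\<Omega> \<inter> U = {x\<in>U. \<rho> x < 0}" and fr: "frontier \<Omega> \<inter> U = {x\<in>U. \<rho> x = 0}"
begin

definition "m = (SOME m. m > 0 \<and> (\<forall>z\<in>cball p s. m \<le> norm (grad \<rho> z)))"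
lemma m: "m > 0" "\<And>z. z \<in> cball p s \<Longrightarrow> m \<le> norm (grad \<rho> z)"
  using someI_ex[OF mex] unfolding m_def by auto

definition "r0 = min (s / 4) (m / (2 * L))"
lemma r0: "r0 > 0" "r0 \<le> s / 4" "2 * r0 * L \<le> m"
  using m(1) s L_pos by (auto simp: r0_def min_def field_simps)

definition "NN q = (1 / norm (grad \<rho> q)) *\<^sub>R grad \<rho> q"

lemma NN: assumes "q \<in> U" shows "norm (NN q) = 1" "grad \<rho> q \<bullet> w = norm (grad \<rho> q) * (NN q \<bullet> w)"
  using gnz[OF assms] by (auto simp: NN_def)

lemma near:
  assumes q: "q \<in> ball p (s / 2)" and w: "norm (y - q) < 2 * r0"
  shows "y \<in> cball p s" "q \<in> cball p s"
proof -
  have "dist p y \<le> dist p q + dist q y" by (rule dist_triangle)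
  moreover have "dist q y < s / 2" using w r0 by (simp add: dist_norm norm_minus_commute)
  ultimately show "y \<in> cball p s" using q by simp
  show "q \<in> cball p s" using q zero_le_dist[of p q] by (simp del: zero_le_dist)
qed

lemma ball_int:
  assumes qf: "q \<in> frontier \<Omega>" and q: "q \<in> ball p (s / 2)"
  shows "ball (q - r0 *\<^sub>R NN q) r0 \<subseteq> \<Omega>"
proof
  fix y assume y: "y \<in> ball (q - r0 *\<^sub>R NN q) r0"
  define w where "w = y - q"
  define N where "N = NN q"
  define g where "g = norm (grad \<rho> q)"
  define a where "a = (norm w)^2"
  have qK: "q \<in> cball p s" using q zero_le_dist[of p q] by (simp del: zero_le_dist)
  have qU: "q \<in> U" using qK sub by auto
  have N1: "norm N = 1" using NN[OF qU] by (simp add: N_def)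
  have d: "norm (w + r0 *\<^sub>R N) < r0"
    using y by (simp add: dist_norm w_def N_def algebra_simps norm_minus_commute)
  have wlt: "norm w < 2 * r0"
  proof -
    have "norm w \<le> norm (w + r0 *\<^sub>R N) + norm (r0 *\<^sub>R N)" using norm_triangle_sub[of w "w + r0 *\<^sub>R N"] by simp
    then show ?thesis using d N1 r0 by simp
  qed
  have yK: "y \<in> cball p s" using near[OF q, of y] wlt by (simp add: w_def)
  have NN1: "N \<bullet> N = 1" using N1 power2_norm_eq_inner[of N] by simp
  have "(norm (w + r0 *\<^sub>R N))^2 = (w + r0 *\<^sub>R N) \<bullet> (w + r0 *\<^sub>R N)" by (rule power2_norm_eq_inner)
  also have "\<dots> = w \<bullet> w + 2 * r0 * (N \<bullet> w) + r0^2 * (N \<bullet> N)"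
    by (simp add: inner_add_left inner_add_right inner_commute algebra_simps power2_eq_square)
  also have "\<dots> = a + 2 * r0 * (N \<bullet> w) + r0^2" by (simp add: NN1 a_def power2_norm_eq_inner)
  finally have "(norm (w + r0 *\<^sub>R N))^2 = a + 2 * r0 * (N \<bullet> w) + r0^2" .
  moreover have "(norm (w + r0 *\<^sub>R N))^2 < r0^2" using d by (simp add: power_strict_mono)
  ultimately have Nw: "N \<bullet> w < - a / (2 * r0)" using r0(1) by (simp add: field_simps)
  have g: "g \<ge> m" "g > 0" using m qK gnz[OF qU] by (auto simp: g_def)
  have a0: "a \<ge> 0" by (simp add: a_def)
  have "grad \<rho> q \<bullet> w = g * (N \<bullet> w)" using NN[OF qU] by (simp add: g_def N_def)
  also have "\<dots> < g * (- a / (2 * r0))" using mult_strict_left_mono[OF Nw g(2)] by simp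
  also have "\<dots> \<le> m * (- a / (2 * r0))"
    using g a0 r0(1) by (intro mult_right_mono_neg) (auto simp: divide_nonneg_pos)
  also have "\<dots> \<le> - L * a"
  proof -
    have "2 * r0 * L * a \<le> m * a" using r0(3) a0 by (intro mult_right_mono) auto
    then show ?thesis using r0(1) by (simp add: field_simps)
  qed
  finally have gw: "grad \<rho> q \<bullet> w < - L * a" .
  have rq: "\<rho> q = 0" using qf qU fr by auto
  have "\<rho> y - \<rho> q - grad \<rho> q \<bullet> (y - q) \<le> L * (norm (y - q))^2"
    using taylor[OF yK qK] by simp
  then have "\<rho> y < 0" using gw rq by (simp add: w_def a_def)
  then show "y \<in> \<Omega>" using inter yK sub by auto
qed

lemma ball_ext:
  assumes qf: "q \<in> frontier \<Omega>" and q: "q \<in> ball p (s / 2)" and z: "z \<in> \<Omega>"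
  shows "dist z (q + r0 *\<^sub>R NN q) \<ge> r0"
proof (rule ccontr)
  assume "\<not> ?thesis"
  then have y: "dist z (q + r0 *\<^sub>R NN q) < r0" by simp
  define y where "y = z"
  define w where "w = y - q"
  define N where "N = NN q"
  define g where "g = norm (grad \<rho> q)"
  define a where "a = (norm w)^2"
  have qK: "q \<in> cball p s" using q zero_le_dist[of p q] by (simp del: zero_le_dist)
  have qU: "q \<in> U" using qK sub by auto
  have N1: "norm N = 1" using NN[OF qU] by (simp add: N_def)
  have d: "norm (w - r0 *\<^sub>R N) < r0"
    using y by (simp add: dist_norm w_def N_def y_def algebra_simps)
  have wlt: "norm w < 2 * r0"
  proof -
    have "norm w \<le> norm (w - r0 *\<^sub>R N) + norm (r0 *\<^sub>R N)" using norm_triangle_sub[of w "w - r0 *\<^sub>R N"] by simp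
    then show ?thesis using d N1 r0 by simp
  qed
  have yK: "y \<in> cball p s" using near[OF q, of y] wlt by (simp add: w_def)
  have NN1: "N \<bullet> N = 1" using N1 power2_norm_eq_inner[of N] by simp
  have "(norm (w - r0 *\<^sub>R N))^2 = (w - r0 *\<^sub>R N) \<bullet> (w - r0 *\<^sub>R N)" by (rule power2_norm_eq_inner)
  also have "\<dots> = w \<bullet> w - 2 * r0 * (N \<bullet> w) + r0^2 * (N \<bullet> N)"
    by (simp add: inner_diff_left inner_diff_right inner_commute algebra_simps power2_eq_square)
  also have "\<dots> = a - 2 * r0 * (N \<bullet> w) + r0^2" by (simp add: NN1 a_def power2_norm_eq_inner)
  finally have "(norm (w - r0 *\<^sub>R N))^2 = a - 2 * r0 * (N \<bullet> w) + r0^2" .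
  moreover have "(norm (w - r0 *\<^sub>R N))^2 < r0^2" using d by (simp add: power_strict_mono)
  ultimately have Nw: "N \<bullet> w > a / (2 * r0)" using r0(1) by (simp add: field_simps)
  have g: "g \<ge> m" "g > 0" using m qK gnz[OF qU] by (auto simp: g_def)
  have a0: "a \<ge> 0" by (simp add: a_def)
  have "L * a \<le> m * (a / (2 * r0))"
  proof -
    have "2 * r0 * L * a \<le> m * a" using r0(3) a0 by (intro mult_right_mono) auto
    then show ?thesis using r0(1) by (simp add: field_simps)
  qed
  also have "\<dots> \<le> g * (a / (2 * r0))"
    using g a0 r0(1) by (intro mult_right_mono) auto
  also have "\<dots> < g * (N \<bullet> w)" using mult_strict_left_mono[OF Nw g(2)] by simp
  also have "\<dots> = grad \<rho> q \<bullet> w" using NN[OF qU] by (simp add: g_def N_def)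
  finally have gw: "grad \<rho> q \<bullet> w > L * a" .
  have rq: "\<rho> q = 0" using qf qU fr by auto
  have "- (\<rho> y - \<rho> q - grad \<rho> q \<bullet> (y - q)) \<le> L * (norm (y - q))^2"
    using taylor[OF yK qK] by simp
  then have "\<rho> y > 0" using gw rq by (simp add: w_def a_def)
  moreover have "\<rho> y < 0" using inter yK sub z by (auto simp: y_def)
  ultimately show False by simp
qed

end

context chart_dom begin

lemma align:
  assumes qf: "q \<in> frontier \<Omega>" and qU: "q \<in> U" and xq: "x \<noteq> q" and bx: "ball x (dist x q) \<subseteq> \<Omega>"
  shows "x = q + dist x q *\<^sub>R (- NN q)"
proof -
  define w where "w = x - q"
  define G where "G = grad \<rho> q"
  have w0: "w \<noteq> 0" using xq by (simp add: w_def)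
  have ww: "w \<bullet> w > 0" using w0 by simp
  have rq: "\<rho> q = 0" using qf qU fr by auto
  have claim: "G \<bullet> v \<le> 0" if vw: "v \<bullet> w > 0" for v
  proof (rule ccontr)
    assume "\<not> G \<bullet> v \<le> 0"
    then have Gv: "G \<bullet> v > 0" by simp
    have der: "((\<lambda>t. \<rho> (q + t *\<^sub>R v)) has_real_derivative (grad \<rho> (q + 0 *\<^sub>R v) \<bullet> v)) (at 0)"
      by (rule path_deriv) (use d\<rho>[OF qU] in simp)
    obtain d where d: "d > 0" "\<And>h. h > 0 \<Longrightarrow> h < d \<Longrightarrow> \<rho> (q + 0 *\<^sub>R v) < \<rho> (q + (0 + h) *\<^sub>R v)"
      using DERIV_pos_inc_right[OF der] Gv by (auto simp: G_def)
    obtain \<epsilon> where \<epsilon>: "\<epsilon> > 0" "ball q \<epsilon> \<subseteq> U" using U qU open_contains_ball by blast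
    have v0: "v \<noteq> 0" using vw by auto
    have nv: "norm v > 0" using v0 by simp
    define h where "h = min (d / 2) (min (\<epsilon> / (2 * norm v)) ((v \<bullet> w) / (norm v)^2))"
    have h0: "h > 0" using d \<epsilon> nv vw by (simp add: h_def)
    have hd: "h < d" using d by (simp add: h_def)
    have he: "h * norm v < \<epsilon>"
    proof -
      have "h \<le> \<epsilon> / (2 * norm v)" by (simp add: h_def)
      then have "h * norm v \<le> \<epsilon> / 2" using nv by (simp add: field_simps)
      then show ?thesis using \<epsilon> by simp
    qed
    have hw: "h * (norm v)^2 \<le> v \<bullet> w"
    proof -
      have "h \<le> (v \<bullet> w) / (norm v)^2" by (simp add: h_def)
      then show ?thesis using nv by (simp add: field_simps)
    qed
    define y where "y = q + h *\<^sub>R v"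
    have yU: "y \<in> U" using \<epsilon>(2) he h0 by (auto simp: y_def dist_norm)
    have "(dist x y)^2 = (w - h *\<^sub>R v) \<bullet> (w - h *\<^sub>R v)"
      by (simp add: dist_norm y_def w_def power2_norm_eq_inner algebra_simps)
    also have "\<dots> = w \<bullet> w - 2 * h * (v \<bullet> w) + h^2 * (norm v)^2"
    proof -
      have vv: "(norm v)^2 = v \<bullet> v" by (simp add: power2_norm_eq_inner)
      have "(w - h *\<^sub>R v) \<bullet> (w - h *\<^sub>R v) = w \<bullet> w - h * (w \<bullet> v) - h * (v \<bullet> w) + h * h * (v \<bullet> v)"
        by (simp add: inner_diff_left inner_diff_right algebra_simps)
      then show ?thesis unfolding vv by (simp add: inner_commute[of w v] power2_eq_square)
    qed
    also have "\<dots> < w \<bullet> w"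
    proof -
      have "h^2 * (norm v)^2 = h * (h * (norm v)^2)" by (simp add: power2_eq_square)
      also have "\<dots> \<le> h * (v \<bullet> w)" using hw h0 by (intro mult_left_mono) auto
      finally have "h^2 * (norm v)^2 \<le> h * (v \<bullet> w)" .
      moreover have "h * (v \<bullet> w) > 0" using h0 vw by simp
      ultimately show ?thesis by simp
    qed
    also have "\<dots> = (dist x q)^2" by (simp add: dist_norm w_def power2_norm_eq_inner)
    finally have "dist x y < dist x q" by (simp add: power_less_imp_less_base)
    then have "y \<in> \<Omega>" using bx by auto
    then have "\<rho> y < 0" using inter yU by auto
    moreover have "\<rho> q < \<rho> y" using d(2)[OF h0 hd] by (simp add: y_def)
    ultimately show False using rq by simp
  qed
  define c where "c = (G \<bullet> w) / (w \<bullet> w)"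
  define P where "P = G - c *\<^sub>R w"
  have Pw: "P \<bullet> w = 0" using ww by (simp add: P_def c_def inner_diff_left)
  have GP: "G \<bullet> P = P \<bullet> P" using Pw by (simp add: P_def inner_diff_left inner_diff_right inner_commute)
  have P0: "P = 0"
  proof (rule ccontr)
    assume "P \<noteq> 0"
    then have PP: "P \<bullet> P > 0" by simp
    define e where "e = (P \<bullet> P) / (2 * (\<bar>G \<bullet> w\<bar> + 1))"
    have e0: "e > 0" using PP by (simp add: e_def)
    have "(P + e *\<^sub>R w) \<bullet> w > 0" using Pw e0 ww by (simp add: inner_add_left)
    then have "G \<bullet> (P + e *\<^sub>R w) \<le> 0" by (rule claim)
    then have "P \<bullet> P + e * (G \<bullet> w) \<le> 0" using GP by (simp add: inner_add_right)
    moreover have "e * \<bar>G \<bullet> w\<bar> < P \<bullet> P"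
    proof -
      have "e * \<bar>G \<bullet> w\<bar> = (P \<bullet> P) * (\<bar>G \<bullet> w\<bar> / (2 * (\<bar>G \<bullet> w\<bar> + 1)))" by (simp add: e_def)
      also have "\<dots> < (P \<bullet> P) * 1" using PP by (intro mult_strict_left_mono) auto
      finally show ?thesis by simp
    qed
    moreover have "- (e * \<bar>G \<bullet> w\<bar>) \<le> e * (G \<bullet> w)"
    proof -
      have "- \<bar>G \<bullet> w\<bar> \<le> G \<bullet> w" by linarith
      from mult_left_mono[OF this, of e] e0 show ?thesis by simp
    qed
    ultimately show False by simp
  qed
  have Gc: "G = c *\<^sub>R w" using P0 by (simp add: P_def)
  have Gw: "G \<bullet> w \<le> 0" using claim[OF ww] .
  have Gnz: "G \<noteq> 0" using gnz[OF qU] by (simp add: G_def)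
  have c0: "c < 0"
  proof -
    have "c \<le> 0" using Gw ww by (simp add: c_def divide_nonpos_pos)
    moreover have "c \<noteq> 0" using Gnz Gc by auto
    ultimately show ?thesis by simp
  qed
  have nG: "norm G = - c * norm w" using Gc c0 by simp
  have nw: "norm w > 0" using w0 by simp
  have "NN q = (1 / norm G) *\<^sub>R G" by (simp add: NN_def G_def)
  also have "\<dots> = (- 1 / norm w) *\<^sub>R w" using c0 nw by (simp add: nG Gc field_simps)
  finally have "dist x q *\<^sub>R (- NN q) = (norm w * (1 / norm w)) *\<^sub>R w"
    by (simp add: dist_norm w_def)
  also have "\<dots> = w" using nw by simp
  finally show ?thesis by (simp add: w_def)
qed

end

definition locprop :: "(real^'n) set \<Rightarrow> real^'n \<Rightarrow> real \<Rightarrow> real \<Rightarrow> bool" where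
  "locprop \<Omega> p \<eta> r \<longleftrightarrow> (\<forall>q\<in>frontier \<Omega> \<inter> ball p \<eta>. \<exists>e. norm e = 1 \<and> ball (q + r *\<^sub>R e) r \<subseteq> \<Omega> \<and>
      (\<forall>z\<in>\<Omega>. r \<le> dist z (q - r *\<^sub>R e)) \<and> (\<forall>x. x \<noteq> q \<longrightarrow> ball x (dist x q) \<subseteq> \<Omega> \<longrightarrow> x = q + dist x q *\<^sub>R e))"

lemma local_geom:
  fixes \<Omega> :: "(real^'n) set"
  assumes dom: "smooth_bounded_domain \<Omega>" and p: "p \<in> frontier \<Omega>"
  shows "\<exists>\<eta>>0. \<exists>r>0. locprop \<Omega> p \<eta> r"
proof -
  obtain U \<rho> where U: "p \<in> U" "smooth_on U \<rho>" "\<forall>x\<in>U. grad \<rho> x \<noteq> 0"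
    "\<Omega> \<inter> U = {x\<in>U. \<rho> x < 0}" "frontier \<Omega> \<inter> U = {x\<in>U. \<rho> x = 0}"
    using dom p unfolding smooth_bounded_domain_def by blast
  have oU: "open U" and C2: "Ck_on 2 U \<rho>" using U(2) by (auto simp: smooth_on_def)
  obtain s where spos: "s > 0" and sU: "cball p s \<subseteq> U" using oU U(1) open_contains_cball by blast
  interpret chart_dom U \<rho> p s \<Omega>
    by unfold_locales (use oU C2 U spos sU in auto)
  have "locprop \<Omega> p (s / 2) r0"
    unfolding locprop_def
  proof
    fix q assume q: "q \<in> frontier \<Omega> \<inter> ball p (s / 2)"
    have qK: "q \<in> cball p s" using q zero_le_dist[of p q] by (simp del: zero_le_dist)
    have qU: "q \<in> U" using qK sU by auto
    show "\<exists>e. norm e = 1 \<and> ball (q + r0 *\<^sub>R e) r0 \<subseteq> \<Omega> \<and>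
      (\<forall>z\<in>\<Omega>. r0 \<le> dist z (q - r0 *\<^sub>R e)) \<and> (\<forall>x. x \<noteq> q \<longrightarrow> ball x (dist x q) \<subseteq> \<Omega> \<longrightarrow> x = q + dist x q *\<^sub>R e)"
    proof (intro exI[of _ "- NN q"] conjI allI impI ballI)
      show "norm (- NN q) = 1" using NN[OF qU] by simp
      show "ball (q + r0 *\<^sub>R - NN q) r0 \<subseteq> \<Omega>" using ball_int q by simp
      fix z assume "z \<in> \<Omega>"
      then show "r0 \<le> dist z (q - r0 *\<^sub>R - NN q)" using ball_ext q by simp
    next
      fix x assume "x \<noteq> q" "ball x (dist x q) \<subseteq> \<Omega>"
      then show "x = q + dist x q *\<^sub>R - NN q" using align q qU by blast
    qed
  qed
  then show ?thesis using spos r0 by (metis half_gt_zero)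
qed

lemma locprop_shrink:
  assumes "locprop \<Omega> p \<eta> r" "0 < r'" "r' \<le> r" "q \<in> frontier \<Omega> \<inter> ball p \<eta>"
  shows "\<exists>e. norm e = 1 \<and> ball (q + r' *\<^sub>R e) r' \<subseteq> \<Omega> \<and>
      (\<forall>z\<in>\<Omega>. r' \<le> dist z (q - r' *\<^sub>R e)) \<and> (\<forall>x. x \<noteq> q \<longrightarrow> ball x (dist x q) \<subseteq> \<Omega> \<longrightarrow> x = q + dist x q *\<^sub>R e)"
proof -
  obtain e where e: "norm e = 1" "ball (q + r *\<^sub>R e) r \<subseteq> \<Omega>"
    "\<forall>z\<in>\<Omega>. r \<le> dist z (q - r *\<^sub>R e)" "\<forall>x. x \<noteq> q \<longrightarrow> ball x (dist x q) \<subseteq> \<Omega> \<longrightarrow> x = q + dist x q *\<^sub>R e"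
    using assms(1,4) unfolding locprop_def by blast
  have dd: "dist (q + r' *\<^sub>R e) (q + r *\<^sub>R e) = r - r'" "dist (q - r *\<^sub>R e) (q - r' *\<^sub>R e) = r - r'"
    using e(1) assms(3) by (simp_all add: dist_norm algebra_simps flip: scaleR_diff_left)
  have "ball (q + r' *\<^sub>R e) r' \<subseteq> ball (q + r *\<^sub>R e) r"
  proof
    fix y assume "y \<in> ball (q + r' *\<^sub>R e) r'"
    then have "dist (q + r' *\<^sub>R e) y < r'" by simp
    moreover have "dist (q + r *\<^sub>R e) y \<le> dist (q + r' *\<^sub>R e) (q + r *\<^sub>R e) + dist (q + r' *\<^sub>R e) y"
      by (rule dist_triangle3)
    ultimately show "y \<in> ball (q + r *\<^sub>R e) r" using dd by simp
  qed
  moreover have "\<forall>z\<in>\<Omega>. r' \<le> dist z (q - r' *\<^sub>R e)"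
  proof
    fix z assume z: "z \<in> \<Omega>"
    have "dist z (q - r *\<^sub>R e) \<le> dist z (q - r' *\<^sub>R e) + dist (q - r *\<^sub>R e) (q - r' *\<^sub>R e)"
      by (rule dist_triangle2)
    then show "r' \<le> dist z (q - r' *\<^sub>R e)" using e(3) z dd by force
  qed
  ultimately show ?thesis using e by blast
qed

lemma geom:
  fixes \<Omega> :: "(real^'n) set"
  assumes dom: "smooth_bounded_domain \<Omega>"
  shows "\<exists>r>0. \<forall>x\<in>\<Omega>. \<exists>q e. norm e = 1 \<and> x = q + infdist x (frontier \<Omega>) *\<^sub>R e \<and>
           ball (q + r *\<^sub>R e) r \<subseteq> \<Omega> \<and> (\<forall>z\<in>\<Omega>. r \<le> dist z (q - r *\<^sub>R e))"
proof -
  have oO: "open \<Omega>" and bO: "bounded \<Omega>" and neO: "\<Omega> \<noteq> {}"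
    using dom by (auto simp: smooth_bounded_domain_def)
  define F where "F = frontier \<Omega>"
  have Fne: "F \<noteq> {}" unfolding F_def
    by (rule frontier_not_empty[OF neO]) (use bO not_bounded_UNIV in blast)
  have Fc: "compact F" unfolding F_def by (rule compact_frontier_bounded[OF bO])
  have "\<forall>p\<in>F. \<exists>z. fst z > 0 \<and> snd z > 0 \<and> locprop \<Omega> p (fst z) (snd z)"
    using local_geom[OF dom] unfolding F_def by force
  then obtain Z where Z: "\<And>p. p \<in> F \<Longrightarrow> fst (Z p) > 0 \<and> snd (Z p) > 0 \<and> locprop \<Omega> p (fst (Z p)) (snd (Z p))"
    by metis
  define \<eta> where "\<eta> p = fst (Z p)" for p
  define rr where "rr p = snd (Z p)" for p
  have cov: "F \<subseteq> (\<Union>p\<in>F. ball p (\<eta> p))" using Z by (force simp: \<eta>_def)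
  obtain D where D: "D \<subseteq> F" "finite D" "F \<subseteq> (\<Union>p\<in>D. ball p (\<eta> p))"
    using compactE_image[OF Fc _ cov] by blast
  have Dne: "D \<noteq> {}" using D(3) Fne by auto
  define r where "r = Min (rr ` D)"
  have r0: "r > 0" unfolding r_def using D Dne Z by (auto simp: rr_def)
  have rle: "r \<le> rr p" if "p \<in> D" for p unfolding r_def using D(2) that by simp
  have "\<forall>x\<in>\<Omega>. \<exists>q e. norm e = 1 \<and> x = q + infdist x (frontier \<Omega>) *\<^sub>R e \<and>
           ball (q + r *\<^sub>R e) r \<subseteq> \<Omega> \<and> (\<forall>z\<in>\<Omega>. r \<le> dist z (q - r *\<^sub>R e))"
  proof
    fix x assume x: "x \<in> \<Omega>"
    obtain q where q: "q \<in> F" "infdist x F = dist x q"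
      using infdist_attains_inf[of F x] Fne unfolding F_def by auto
    have xq: "x \<noteq> q" using q(1) x oO frontier_disjoint_eq unfolding F_def by blast
    have bx: "ball x (dist x q) \<subseteq> \<Omega>" using ball_infdist_sub[OF oO x] q(2) unfolding F_def by simp
    obtain p where p: "p \<in> D" "q \<in> ball p (\<eta> p)" using D(3) q(1) by blast
    have lp: "locprop \<Omega> p (\<eta> p) (rr p)" using Z D(1) p(1) by (auto simp: \<eta>_def rr_def)
    obtain e where e: "norm e = 1" "ball (q + r *\<^sub>R e) r \<subseteq> \<Omega>" "\<forall>z\<in>\<Omega>. r \<le> dist z (q - r *\<^sub>R e)"
       "\<forall>x. x \<noteq> q \<longrightarrow> ball x (dist x q) \<subseteq> \<Omega> \<longrightarrow> x = q + dist x q *\<^sub>R e"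
      using locprop_shrink[OF lp r0 rle[OF p(1)]] q(1) p(2) unfolding F_def by blast
    have "x = q + infdist x (frontier \<Omega>) *\<^sub>R e" using e(4) xq bx q(2) unfolding F_def by simp
    then show "\<exists>q e. norm e = 1 \<and> x = q + infdist x (frontier \<Omega>) *\<^sub>R e \<and>
           ball (q + r *\<^sub>R e) r \<subseteq> \<Omega> \<and> (\<forall>z\<in>\<Omega>. r \<le> dist z (q - r *\<^sub>R e))"
      using e by blast
  qed
  then show ?thesis using r0 by blast
qed

lemma cont_eps:
  fixes h :: "real \<Rightarrow> real"
  assumes "isCont h 0" "\<epsilon> > 0"
  shows "\<exists>\<delta>>0. \<forall>d. \<bar>d\<bar> < \<delta> \<longrightarrow> \<bar>h d - h 0\<bar> < \<epsilon>"
  using assms unfolding continuous_at_eps_delta by (simp add: dist_real_def)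

context setting begin

lemma main:
  "\<forall>\<epsilon>>0. \<exists>\<delta>>0. \<forall>x\<in>\<Omega>. infdist x (frontier \<Omega>) < \<delta> \<longrightarrow>
           \<bar>infdist x (frontier \<Omega>) powr ((real CARD('n) - 2) / 2) * u x
             - \<alpha> * 2 powr (- (real CARD('n) - 2) / 2)\<bar> < \<epsilon>"
proof (intro allI impI)
  fix \<epsilon> :: real assume \<epsilon>: "\<epsilon> > 0"
  obtain r where r: "r > 0" and G: "\<forall>x\<in>\<Omega>. \<exists>q e. norm e = 1 \<and> x = q + infdist x (frontier \<Omega>) *\<^sub>R e \<and>
           ball (q + r *\<^sub>R e) r \<subseteq> \<Omega> \<and> (\<forall>z\<in>\<Omega>. r \<le> dist z (q - r *\<^sub>R e))"
    using geom[OF dom] by blast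
  have a: "\<alpha> > 0" by (rule alpha_pos)
  have k: "kk > 0" by (rule kk_pos)
  define T where "T = \<alpha> * 2 powr (- (real CARD('n) - 2) / 2)"
  have T: "T = \<alpha> * (1 / 2) powr kk"
  proof -
    have "- (real CARD('n) - 2) / 2 = - kk" unfolding kk_def by (simp add: minus_divide_left)
    then have "T = \<alpha> * 2 powr (- kk)" by (simp add: T_def)
    also have "\<dots> = \<alpha> * (1 / 2) powr kk" by (simp add: powr_minus powr_divide inverse_eq_divide)
    finally show ?thesis .
  qed
  define hp where "hp d = \<alpha> * (r / (2 * r + d)) powr kk" for d
  define hm where "hm d = \<alpha> * (r / (2 * r - d)) powr kk" for d
  have hp0: "hp 0 = T" and hm0: "hm 0 = T" using r by (simp_all add: hp_def hm_def T)
  have "isCont hp 0" unfolding hp_def using r by (intro continuous_intros) auto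
  then obtain \<delta>1 where \<delta>1: "\<delta>1 > 0" "\<And>d. \<bar>d\<bar> < \<delta>1 \<Longrightarrow> \<bar>hp d - T\<bar> < \<epsilon>"
    using cont_eps[OF _ \<epsilon>] hp0 by metis
  have "isCont hm 0" unfolding hm_def using r by (intro continuous_intros) auto
  then obtain \<delta>2 where \<delta>2: "\<delta>2 > 0" "\<And>d. \<bar>d\<bar> < \<delta>2 \<Longrightarrow> \<bar>hm d - T\<bar> < \<epsilon>"
    using cont_eps[OF _ \<epsilon>] hm0 by metis
  have oO: "open \<Omega>" and bO: "bounded \<Omega>" and neO: "\<Omega> \<noteq> {}"
    using dom by (auto simp: smooth_bounded_domain_def)
  have Fne: "frontier \<Omega> \<noteq> {}"
    by (rule frontier_not_empty[OF neO]) (use bO not_bounded_UNIV in blast)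
  show "\<exists>\<delta>>0. \<forall>x\<in>\<Omega>. infdist x (frontier \<Omega>) < \<delta> \<longrightarrow>
           \<bar>infdist x (frontier \<Omega>) powr ((real CARD('n) - 2) / 2) * u x
             - \<alpha> * 2 powr (- (real CARD('n) - 2) / 2)\<bar> < \<epsilon>"
  proof (intro exI[of _ "min (min \<delta>1 \<delta>2) r"] conjI ballI impI)
    show "min (min \<delta>1 \<delta>2) r > 0" using \<delta>1 \<delta>2 r by simp
    fix x assume x: "x \<in> \<Omega>" and dx: "infdist x (frontier \<Omega>) < min (min \<delta>1 \<delta>2) r"
    define d where "d = infdist x (frontier \<Omega>)"
    have d0: "d > 0" unfolding d_def
      by (rule infdist_pos_not_in_closed[OF frontier_closed Fne]) (use x oO frontier_disjoint_eq in blast)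
    have dr: "d < r" "d < \<delta>1" "d < \<delta>2" using dx by (auto simp: d_def)
    obtain q e where e: "norm e = 1" "x = q + d *\<^sub>R e" "ball (q + r *\<^sub>R e) r \<subseteq> \<Omega>"
      "\<forall>z\<in>\<Omega>. r \<le> dist z (q - r *\<^sub>R e)"
      using G x unfolding d_def by blast
    have dxc: "dist x (q + r *\<^sub>R e) = r - d"
    proof -
      have "x - (q + r *\<^sub>R e) = (d - r) *\<^sub>R e" using e(2) by (simp add: algebra_simps)
      then show ?thesis using e(1) dr by (simp add: dist_norm)
    qed
    have dxc': "dist x (q - r *\<^sub>R e) = r + d"
    proof -
      have "x - (q - r *\<^sub>R e) = (d + r) *\<^sub>R e" using e(2) by (simp add: algebra_simps)
      then show ?thesis using e(1) dr d0 by (simp add: dist_norm)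
    qed
    have xb: "x \<in> ball (q + r *\<^sub>R e) r" using dxc d0 by (simp add: dist_commute)
    have up: "u x \<le> \<alpha> * (r / (r^2 - (r - d)^2)) powr kk"
      using upper_lim[OF r e(3) xb] dxc by (simp add: hsq_dist)
    have lo: "\<alpha> * (r / ((r + d)^2 - r^2)) powr kk \<le> u x"
      using lower_lim[OF r e(4) x] dxc' d0 by (simp add: hsq_dist)
    have e1: "r^2 - (r - d)^2 = d * (2 * r - d)" by (simp add: power2_eq_square algebra_simps)
    have e2: "(r + d)^2 - r^2 = d * (2 * r + d)" by (simp add: power2_eq_square algebra_simps)
    have dk: "d powr kk > 0" using d0 by simp
    have "d powr kk * u x \<le> d powr kk * (\<alpha> * (r / (d * (2 * r - d))) powr kk)"
      using up e1 dk by (simp add: mult_left_mono)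
    also have "\<dots> = hm d"
    proof -
      have eq: "r / (d * (2 * r - d)) = (r / (2 * r - d)) / d" by (simp add: field_simps)
      have e: "(r / (d * (2 * r - d))) powr kk = (r / (2 * r - d)) powr kk / d powr kk"
        unfolding eq by (rule powr_divide)
      show ?thesis unfolding e hm_def using dk by simp
    qed
    finally have U: "d powr kk * u x \<le> hm d" .
    have "hp d = d powr kk * (\<alpha> * (r / (d * (2 * r + d))) powr kk)"
    proof -
      have eq: "r / (d * (2 * r + d)) = (r / (2 * r + d)) / d" by (simp add: field_simps)
      have e: "(r / (d * (2 * r + d))) powr kk = (r / (2 * r + d)) powr kk / d powr kk"
        unfolding eq by (rule powr_divide)
      show ?thesis unfolding e hp_def using dk by simp
    qed
    also have "\<dots> \<le> d powr kk * u x"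
      using lo e2 dk by (simp add: mult_left_mono)
    finally have L: "hp d \<le> d powr kk * u x" .
    have "\<bar>hp d - T\<bar> < \<epsilon>" "\<bar>hm d - T\<bar> < \<epsilon>" using \<delta>1(2) \<delta>2(2) d0 dr by auto
    then have "\<bar>d powr kk * u x - T\<bar> < \<epsilon>" using U L by linarith
    then show "\<bar>infdist x (frontier \<Omega>) powr ((real CARD('n) - 2) / 2) * u x
             - \<alpha> * 2 powr (- (real CARD('n) - 2) / 2)\<bar> < \<epsilon>"
      by (simp add: d_def kk_def T_def)
  qed
qed

end

theorem lemma3p4:
  fixes f :: "real^'n::finite \<Rightarrow> real" and \<Gamma> :: "(real^'n) set"
    and \<Omega> :: "(real^'n) set" and u :: "real^'n \<Rightarrow> real" and \<alpha> :: real
  assumes "CARD('n) \<ge> 3"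
    and "smooth_bounded_domain \<Omega>"
    and "structural f \<Gamma>"
    and "canonical_const f \<Gamma> \<alpha>"
    and "visc_solution f \<Gamma> u \<Omega>"
    and "\<forall>x\<in>\<Omega>. u x > 0"
    and "\<forall>M. \<exists>\<delta>>0. \<forall>x\<in>\<Omega>. infdist x (frontier \<Omega>) < \<delta> \<longrightarrow> u x > M"
  shows "\<forall>\<epsilon>>0. \<exists>\<delta>>0. \<forall>x\<in>\<Omega>. infdist x (frontier \<Omega>) < \<delta> \<longrightarrow>
           \<bar>infdist x (frontier \<Omega>) powr ((real CARD('n) - 2) / 2) * u x
             - \<alpha> * 2 powr (- (real CARD('n) - 2) / 2)\<bar> < \<epsilon>"
proof -
  interpret setting f \<Gamma> \<Omega> u \<alpha>
    by unfold_locales (use assms in auto)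
  show ?thesis by (rule main)
qed

end
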